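(* Assume that $(\hat R,\hat F)$ satisfies conditions (i), (ii) and (iv), and let $M$ be a half-quantum matrix. Then for every $j\ge1$, \[ S^{(2)}_{j,j+1}M_{\bar j}M_{\overline{j+1}}A^{(2)}_{j,j+1}=0, \] and for every $q$-admissible positive integer $k$ and every $i=0,1,2,\dots$, \[ A^{(k)\uparrow i}\,M_{\overline{i+1\to i+k}}\,A^{(k)\uparrow i}=M_{\overline{i+1\to i+k}}\,A^{(k)\uparrow i},\qquad S^{(k)\uparrow i}\,M_{\overline{i+1\to i+k}}\,S^{(k)\uparrow i}=S^{(k)\uparrow i}\,M_{\overline{i+1\to i+k}}. \]
   Context: Let $V$ be a finite-dimensional complex vector space, $\mathrm{Id}$ the identity, $P$ the flip on $V\otimes V$. For an operator $X$ on $V$ (possibly with entries in an associative algebra $\mathfrak A$), $X_j$ denotes $X$ acting in the $j$-th tensor factor of $V^{\otimes m}$; for $Y$ on $V\otimes V$, $Y_{j,k}$ denotes $Y$ in factors $j,k$ and $Y_j:=Y_{j,j+1}$. For $Z$ on $V^{\otimes m}$, $Z^{\uparrow i}:=\mathrm{Id}_{V^{\otimes i}}\otimes Z$. $\mathrm{tr}_{(i_1,\dots,i_k)}$ is the partial trace. $j_q:=q^{j-1}+q^{j-3}+\dots+q^{-j+1}$; $j$ is $q$-admissible if $k_q\ne0$ for $k=1,\dots,j$. Let $q\in\mathbb C^*$, $\hat R,\hat F\in\mathrm{Aut}(V\otimes V)$. Conditions: (i) $\hat R_{12}\hat R_{23}\hat R_{12}=\hat R_{23}\hat R_{12}\hat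 R_{23}$, $\hat F_{12}\hat F_{23}\hat F_{12}=\hat F_{23}\hat F_{12}\hat F_{23}$, $\hat R_{12}\hat F_{23}\hat F_{12}=\hat F_{23}\hat F_{12}\hat R_{23}$, $\hat F_{12}\hat F_{23}\hat R_{12}=\hat R_{23}\hat F_{12}\hat F_{23}$. (ii) $2$ is $q$-admissible and $\hat R=qS^{(2)}-q^{-1}A^{(2)}$ with $S^{(2)},A^{(2)}$ idempotents, $S^{(2)}+A^{(2)}=\mathrm{Id}$. (iv) there is $\Psi\in\mathrm{Aut}(V\otimes V)$ with $\mathrm{tr}_{(2)}(\Psi_{12}\hat F_{23})=P_{13}$. Higher $q$-(anti)symmetrizers: $A^{(1)}=S^{(1)}=\mathrm{Id}$, and for $k+1$ $q$-admissible, $(k+1)_qA^{(k+1)}:=A^{(k)}(q^k\mathrm{Id}-k_q\hat R_k)A^{(k)}$, $(k+1)_qS^{(k+1)}:=S^{(k)}(q^{-k}\mathrm{Id}+k_q\hat R_k)S^{(k)}$ (equivalently with $A^{(k)\uparrow1},\hat R_1$, resp. $S^{(k)\uparrow1},\hat R_1$). For an $\mathfrak A$-valued $M$ on $V$: $M_{\bar1}:=M_1$, $M_{\overline{k+1}}:=\hat F_kM_{\bar k}\hat F_k^{-1}$, $M_{\overline{l\to k}}:=M_{\bar l}M_{\overline{l+1}}\cdots M_{\bar k}$. A half-quantum matrix is an $\mathfrak A$-valued $M$ with $S^{(2)}_{12}M_{\bar1}M_{\bar2}A^{(2)}_{12}=0$. *)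

theory Defs
  imports Complex_Main
begin

text \<open>V = C^n with standard basis indexed by {0..<n}. An operator on the
 m-fold tensor power V^{(x)m} with entries in a type 'b is a matrix indexed by index lists
 of length m (entries of the lists in {0..<n}); only values on valid index lists matter,
 equality of operators is equality on valid indices (meq).\<close>

type_synonym 'b op = "nat list \<Rightarrow> nat list \<Rightarrow> 'b"

definition tidx :: "nat \<Rightarrow> nat \<Rightarrow> nat list set" where
  "tidx n m = {xs. length xs = m \<and> set xs \<subseteq> {..<n}}"

definition mmul :: "nat \<Rightarrow> nat \<Rightarrow> ('b::semiring_0) op \<Rightarrow> 'b op \<Rightarrow> 'b op" where
  "mmul n m X Y = (\<lambda>r c. \<Sum>t\<in>tidx n m. X r t * Y t c)"

definition idm :: "('b::zero_neq_one) op" where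
  "idm = (\<lambda>r c. if r = c then 1 else 0)"

definition meq :: "nat \<Rightarrow> nat \<Rightarrow> 'b op \<Rightarrow> 'b op \<Rightarrow> bool" where
  "meq n m X Y = (\<forall>r\<in>tidx n m. \<forall>c\<in>tidx n m. X r c = Y r c)"

text \<open>lift i k Y: the operator Y on V^{(x)k} acting in tensor factors i+1,...,i+k
 (identity elsewhere). Thus X_j = lift (j-1) 1 X, Y_j = Y_{j,j+1} = lift (j-1) 2 Y,
 and Z^{up i} = lift i k Z.\<close>
definition lift :: "nat \<Rightarrow> nat \<Rightarrow> ('b::zero_neq_one) op \<Rightarrow> 'b op" where
  "lift i k Y = (\<lambda>r c. if take i r = take i c \<and> drop (i+k) r = drop (i+k) c
      then Y (take k (drop i r)) (take k (drop i c)) else 0)"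

definition cmap :: "(complex \<Rightarrow> 'b) \<Rightarrow> complex op \<Rightarrow> 'b op" where
  "cmap \<iota> X = (\<lambda>r c. \<iota> (X r c))"

definition ptr2 :: "nat \<Rightarrow> complex op \<Rightarrow> complex op" where
  "ptr2 n X = (\<lambda>r c. \<Sum>b<n. X [r!0, b, r!1] [c!0, b, c!1])"

definition flip :: "complex op" where
  "flip = (\<lambda>r c. if r!0 = c!1 \<and> r!1 = c!0 then 1 else 0)"

definition qnum :: "complex \<Rightarrow> nat \<Rightarrow> complex" where
  "qnum q j = (\<Sum>i<j. q powi (int j - 1 - 2 * int i))"

definition qadm :: "complex \<Rightarrow> nat \<Rightarrow> bool" where
  "qadm q j = (\<forall>k\<in>{1..j}. qnum q k \<noteq> 0)"

text \<open>q-antisymmetrizer / q-symmetrizer A^{(k)}, S^{(k)} as operators on V^{(x)k}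
 (the value at index 0 is irrelevant junk).\<close>
fun qA :: "nat \<Rightarrow> complex \<Rightarrow> complex op \<Rightarrow> nat \<Rightarrow> complex op" where
  "qA n q R 0 = idm"
| "qA n q R (Suc 0) = idm"
| "qA n q R (Suc (Suc k)) =
     (let B = lift 0 (Suc k) (qA n q R (Suc k)) in
      (\<lambda>r c. mmul n (Suc (Suc k))
               (mmul n (Suc (Suc k)) B
                  (\<lambda>r c. q ^ (Suc k) * idm r c - qnum q (Suc k) * lift k 2 R r c)) B r c
             / qnum q (Suc (Suc k))))"

fun qS :: "nat \<Rightarrow> complex \<Rightarrow> complex op \<Rightarrow> nat \<Rightarrow> complex op" where
  "qS n q R 0 = idm"
| "qS n q R (Suc 0) = idm"
| "qS n q R (Suc (Suc k)) =
     (let B = lift 0 (Suc k) (qS n q R (Suc k)) in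
      (\<lambda>r c. mmul n (Suc (Suc k))
               (mmul n (Suc (Suc k)) B
                  (\<lambda>r c. q powi (- int (Suc k)) * idm r c + qnum q (Suc k) * lift k 2 R r c)) B r c
             / qnum q (Suc (Suc k))))"

text \<open>M_{bar k} as an operator on V^{(x)m} (m >= k): M_{bar 1} = M_1,
 M_{bar (k+1)} = F_k M_{bar k} F_k^{-1}; Fi is the inverse of F. Index 0 is junk.\<close>
fun Mbar :: "nat \<Rightarrow> nat \<Rightarrow> (complex \<Rightarrow> 'b::ring_1) \<Rightarrow> complex op \<Rightarrow> complex op \<Rightarrow> 'b op
    \<Rightarrow> nat \<Rightarrow> 'b op" where
  "Mbar n m \<iota> F Fi M 0 = idm"
| "Mbar n m \<iota> F Fi M (Suc 0) = lift 0 1 M"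
| "Mbar n m \<iota> F Fi M (Suc (Suc k)) =
     mmul n m (mmul n m (cmap \<iota> (lift k 2 F)) (Mbar n m \<iota> F Fi M (Suc k))) (cmap \<iota> (lift k 2 Fi))"

text \<open>Mrange n m ... l len = M_{bar l} M_{bar (l+1)} ... M_{bar (l+len-1)}, so
 M_{bar (l -> k)} = Mrange ... l (k - l + 1).\<close>
fun Mrange :: "nat \<Rightarrow> nat \<Rightarrow> (complex \<Rightarrow> 'b::ring_1) \<Rightarrow> complex op \<Rightarrow> complex op \<Rightarrow> 'b op
    \<Rightarrow> nat \<Rightarrow> nat \<Rightarrow> 'b op" where
  "Mrange n m \<iota> F Fi M l 0 = idm"
| "Mrange n m \<iota> F Fi M l (Suc len) =
     mmul n m (Mrange n m \<iota> F Fi M l len) (Mbar n m \<iota> F Fi M (l + len))"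

end

theory Submission
  imports Defs
begin

lemma finite_tidx[simp]: "finite (tidx n m)"
proof -
  have "tidx n m = {xs. set xs \<subseteq> {..<n} \<and> length xs = m}" unfolding tidx_def by auto
  thus ?thesis using finite_lists_length_eq[of "{..<n}" m] by simp
qed

definition NN :: "nat \<Rightarrow> nat \<Rightarrow> ('b::zero) op \<Rightarrow> 'b op" where
  "NN n m X = (\<lambda>r c. if r \<in> tidx n m \<and> c \<in> tidx n m then X r c else 0)"

definition pm :: "nat \<Rightarrow> nat \<Rightarrow> ('b::semiring_0) op \<Rightarrow> 'b op \<Rightarrow> 'b op" where
  "pm n m X Y = NN n m (mmul n m X Y)"

definition padd :: "('b::plus) op \<Rightarrow> 'b op \<Rightarrow> 'b op" where
  "padd X Y = (\<lambda>r c. X r c + Y r c)"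
definition psub :: "('b::minus) op \<Rightarrow> 'b op \<Rightarrow> 'b op" where
  "psub X Y = (\<lambda>r c. X r c - Y r c)"
definition smul :: "'b::times \<Rightarrow> 'b op \<Rightarrow> 'b op" where
  "smul a X = (\<lambda>r c. a * X r c)"

lemma padd_app[simp]: "padd X Y r c = X r c + Y r c" by (simp add: padd_def)
lemma psub_app[simp]: "psub X Y r c = X r c - Y r c" by (simp add: psub_def)
lemma smul_app[simp]: "smul a X r c = a * X r c" by (simp add: smul_def)

lemma meq_NN: "meq n m X Y \<longleftrightarrow> NN n m X = NN n m Y"
  unfolding meq_def NN_def by (auto simp: fun_eq_iff)

lemma NN_NN[simp]: "NN n m (NN n m X) = NN n m X" by (simp add: NN_def fun_eq_iff)

lemma mmul_NN_left: "mmul n m (NN n m X) Y r c = (if r \<in> tidx n m then mmul n m X Y r c else 0)"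
  unfolding mmul_def NN_def by (auto intro!: sum.cong)
lemma mmul_NN_right: "mmul n m X (NN n m Y) r c = (if c \<in> tidx n m then mmul n m X Y r c else 0)"
  unfolding mmul_def NN_def by (auto intro!: sum.cong)

lemma NN_cong: "(\<And>r c. r \<in> tidx n m \<Longrightarrow> c \<in> tidx n m \<Longrightarrow> X r c = Y r c) \<Longrightarrow> NN n m X = NN n m Y"
  by (simp add: NN_def fun_eq_iff)
lemma pm_NN_left[simp]: "pm n m (NN n m X) Y = pm n m X Y"
  unfolding pm_def by (rule NN_cong) (simp add: mmul_NN_left)
lemma pm_NN_right[simp]: "pm n m X (NN n m Y) = pm n m X Y"
  unfolding pm_def by (rule NN_cong) (simp add: mmul_NN_right)
lemma NN_pm[simp]: "NN n m (pm n m X Y) = pm n m X Y" by (simp add: pm_def)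
lemma NN_mmul[simp]: "NN n m (mmul n m X Y) = pm n m X Y" by (simp add: pm_def)
lemma pm_mmul_left[simp]: "pm n m (mmul n m X Y) Z = pm n m (pm n m X Y) Z"
  by (metis pm_NN_left pm_def)
lemma pm_mmul_right[simp]: "pm n m Z (mmul n m X Y) = pm n m Z (pm n m X Y)"
  by (metis pm_NN_right pm_def)

lemma mmul_assoc: "mmul n m (mmul n m X Y) Z = mmul n m X (mmul n m Y Z)"
proof (rule ext, rule ext)
  fix r c
  have "mmul n m (mmul n m X Y) Z r c = (\<Sum>s\<in>tidx n m. \<Sum>t\<in>tidx n m. X r t * Y t s * Z s c)"
    unfolding mmul_def by (simp add: sum_distrib_right)
  also have "\<dots> = (\<Sum>t\<in>tidx n m. \<Sum>s\<in>tidx n m. X r t * Y t s * Z s c)"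
    by (rule sum.swap)
  also have "\<dots> = mmul n m X (mmul n m Y Z) r c"
    unfolding mmul_def by (simp add: sum_distrib_left mult.assoc)
  finally show "mmul n m (mmul n m X Y) Z r c = mmul n m X (mmul n m Y Z) r c" .
qed

lemma pm_assoc: "pm n m (pm n m X Y) Z = pm n m X (pm n m Y Z)"
  by (metis mmul_assoc pm_def pm_NN_left pm_NN_right)

lemma pm_idm_left[simp]: "pm n m idm X = NN n m (X::'b::semiring_1 op)"
proof -
  have "mmul n m idm X r c = X r c" if "r \<in> tidx n m" for r c
  proof -
    have "mmul n m idm X r c = (\<Sum>t\<in>tidx n m. if t = r then X r c else 0)"
      unfolding mmul_def idm_def by (rule sum.cong) auto
    thus ?thesis using that by simp
  qed
  thus ?thesis unfolding pm_def NN_def by (auto simp: fun_eq_iff)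
qed
lemma pm_idm_right[simp]: "pm n m X idm = NN n m (X::'b::semiring_1 op)"
proof -
  have "mmul n m X idm r c = X r c" if "c \<in> tidx n m" for r c
  proof -
    have "mmul n m X idm r c = (\<Sum>t\<in>tidx n m. if t = c then X r c else 0)"
      unfolding mmul_def idm_def by (rule sum.cong) auto
    thus ?thesis using that by simp
  qed
  thus ?thesis unfolding pm_def NN_def by (auto simp: fun_eq_iff)
qed

lemma NN_padd: "NN n m (padd X Y) = padd (NN n m X) (NN n m (Y::'b::monoid_add op))" by (simp add: NN_def fun_eq_iff)
lemma NN_psub: "NN n m (psub X Y) = psub (NN n m X) (NN n m (Y::'b::group_add op))" by (simp add: NN_def fun_eq_iff)
lemma NN_smul: "NN n m (smul a X) = smul a (NN n m (X::'b::mult_zero op))" by (simp add: NN_def fun_eq_iff)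

lemma pm_padd_left: "pm n m (padd X Y) Z = padd (pm n m X Z) (pm n m Y Z)"
  by (simp add: pm_def mmul_def NN_def fun_eq_iff distrib_right sum.distrib)
lemma pm_padd_right: "pm n m Z (padd X Y) = padd (pm n m Z X) (pm n m Z Y)"
  by (simp add: pm_def mmul_def NN_def fun_eq_iff distrib_left sum.distrib)
lemma pm_psub_left: "pm n m (psub X Y) Z = psub (pm n m X Z) (pm n m (Y::'b::ring op) Z)"
  by (simp add: pm_def mmul_def NN_def fun_eq_iff left_diff_distrib sum_subtractf)
lemma pm_psub_right: "pm n m Z (psub X Y) = psub (pm n m Z X) (pm n m Z (Y::'b::ring op))"
  by (simp add: pm_def mmul_def NN_def fun_eq_iff right_diff_distrib sum_subtractf)
lemma pm_smul_left: "pm n m (smul a X) Z = smul a (pm n m X (Z::'b::semiring_0 op))"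
  by (simp add: pm_def mmul_def NN_def fun_eq_iff sum_distrib_left mult.assoc)
lemma pm_smul_right: "(\<And>x. a * x = x * a) \<Longrightarrow> pm n m Z (smul a X) = smul a (pm n m Z (X::'b::semiring_0 op))"
proof -
  assume h: "\<And>x. a * x = x * a"
  have "Z r t * (a * X t c) = a * (Z r t * X t c)" for r t c
    by (metis h mult.assoc)
  thus ?thesis by (simp add: pm_def mmul_def NN_def fun_eq_iff sum_distrib_left)
qed
lemma pm_smul_right_c: "pm n m Z (smul a X) = smul a (pm n m Z (X::'b::comm_semiring_0 op))"
  by (rule pm_smul_right) (simp add: mult.commute)

lemma pm_zero_left[simp]: "pm n m (\<lambda>_ _. 0) X = (\<lambda>_ _. 0)" by (simp add: pm_def mmul_def NN_def fun_eq_iff)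
lemma pm_zero_right[simp]: "pm n m X (\<lambda>_ _. 0) = (\<lambda>_ _. 0)" by (simp add: pm_def mmul_def NN_def fun_eq_iff)
lemma NN_zero[simp]: "NN n m (\<lambda>_ _. 0) = (\<lambda>_ _. 0)" by (simp add: NN_def fun_eq_iff)

lemma tidx_len: "r \<in> tidx n m \<Longrightarrow> length r = m" by (simp add: tidx_def)

lemma ag_nth:
  assumes "length r = m" "length c = m" "i + k \<le> m"
  shows "(take i r = take i c \<and> drop (i+k) r = drop (i+k) c) \<longleftrightarrow>
         (\<forall>p<m. (p < i \<or> i + k \<le> p) \<longrightarrow> r!p = c!p)"
proof
  assume L: "take i r = take i c \<and> drop (i+k) r = drop (i+k) c"
  show "\<forall>p<m. (p < i \<or> i + k \<le> p) \<longrightarrow> r!p = c!p"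
  proof (intro allI impI)
    fix p assume p: "p < m" "p < i \<or> i + k \<le> p"
    show "r!p = c!p"
    proof (cases "p < i")
      case True
      have "take i r ! p = take i c ! p" using L by simp
      thus ?thesis using True by simp
    next
      case False
      hence pp: "p = (i+k) + (p - (i+k))" using p by simp
      have "drop (i+k) r ! (p - (i+k)) = drop (i+k) c ! (p - (i+k))" using L by simp
      moreover have "r!p = drop (i+k) r ! (p - (i+k))" "c!p = drop (i+k) c ! (p - (i+k))"
        using assms False p by simp_all
      ultimately show ?thesis by simp
    qed
  qed
next
  assume R: "\<forall>p<m. (p < i \<or> i + k \<le> p) \<longrightarrow> r!p = c!p"
  have "take i r = take i c" using assms R by (intro nth_equalityI) auto
  moreover have "drop (i+k) r = drop (i+k) c" using assms R by (intro nth_equalityI) auto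
  ultimately show "take i r = take i c \<and> drop (i+k) r = drop (i+k) c" by simp
qed

lemma lift_alt:
  assumes "length r = m" "length c = m" "i + k \<le> m"
  shows "lift i k Y r c = (if (\<forall>p<m. (p < i \<or> i + k \<le> p) \<longrightarrow> r!p = c!p)
            then Y (take k (drop i r)) (take k (drop i c)) else 0)"
  unfolding lift_def using ag_nth[OF assms] by simp

lemma seg_eq:
  assumes "length r = m" "length t = m" "i + k \<le> m" "\<And>p. i \<le> p \<Longrightarrow> p < i + k \<Longrightarrow> t!p = r!p"
  shows "take k (drop i t) = take k (drop i r)"
  using assms by (auto simp: list_eq_iff_nth_eq)

lemma seg_tidx: "r \<in> tidx n m \<Longrightarrow> i + k \<le> m \<Longrightarrow> take k (drop i r) \<in> tidx n k"
  unfolding tidx_def by (auto dest: in_set_takeD in_set_dropD)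

lemma sum_single:
  assumes "finite S" "t0 \<in> S" "\<And>t. t \<in> S \<Longrightarrow> f t \<noteq> 0 \<Longrightarrow> t = t0"
  shows "sum f S = f t0"
proof -
  have "sum f S = f t0 + sum f (S - {t0})" using assms by (simp add: sum.remove)
  also have "sum f (S - {t0}) = 0" using assms by (intro sum.neutral) auto
  finally show ?thesis by simp
qed

lemma decomp3: "r = take i r @ take k (drop i r) @ drop (i+k) r"
  by (metis append_take_drop_id drop_drop add.commute)

lemma lift_idm[simp]: "lift i k idm = idm"
proof (intro ext)
  fix r c :: "nat list"
  show "lift i k idm r c = idm r c"
  proof (cases "r = c")
    case True thus ?thesis by (simp add: lift_def idm_def)
  next
    case False
    have "\<not> (take i r = take i c \<and> take k (drop i r) = take k (drop i c) \<and> drop (i+k) r = drop (i+k) c)"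
    proof
      assume h: "take i r = take i c \<and> take k (drop i r) = take k (drop i c) \<and> drop (i+k) r = drop (i+k) c"
      have "r = take i r @ take k (drop i r) @ drop (i+k) r" by (rule decomp3)
      also have "\<dots> = take i c @ take k (drop i c) @ drop (i+k) c" using h by simp
      also have "\<dots> = c" by (rule decomp3[symmetric])
      finally show False using False by simp
    qed
    thus ?thesis using False by (auto simp: lift_def idm_def)
  qed
qed

lemma lift_padd: "lift i k (padd X Y) = padd (lift i k X) (lift i k (Y::'b::{monoid_add,zero_neq_one} op))"
  by (simp add: lift_def fun_eq_iff)
lemma lift_psub: "lift i k (psub X Y) = psub (lift i k X) (lift i k (Y::'b::{group_add,zero_neq_one} op))"
  by (simp add: lift_def fun_eq_iff)
lemma lift_smul: "lift i k (smul a X) = smul a (lift i k (X::'b::{mult_zero,zero_neq_one} op))"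
  by (simp add: lift_def fun_eq_iff)
lemma lift_zero[simp]: "lift i k (\<lambda>_ _. 0) = (\<lambda>_ _. 0)"
  by (simp add: lift_def fun_eq_iff)

lemma lift_NN: "i + k \<le> m \<Longrightarrow> NN n m (lift i k (NN n k X)) = NN n m (lift i k X)"
  by (rule NN_cong) (simp add: lift_def NN_def seg_tidx)

lemma lift_NN_cong: "i + k \<le> m \<Longrightarrow> NN n k X = NN n k Y \<Longrightarrow> NN n m (lift i k X) = NN n m (lift i k Y)"
  by (metis lift_NN)

lemma ifif: "((A::bool) \<and> B \<longleftrightarrow> C) \<Longrightarrow> (if A then (if B then y else 0) else 0) = (if C then y else (0::'b::zero))"
  by auto

lemma lift_nest:
  assumes "b + k \<le> p" "a + p \<le> m"
  shows "NN n m (lift a p (lift b k Y)) = NN n m (lift (a+b) k Y)"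
proof (rule NN_cong)
  fix r c assume r: "r \<in> tidx n m" and c: "c \<in> tidx n m"
  hence lr: "length r = m" and lc: "length c = m" by (auto simp: tidx_len)
  have l2: "length (take p (drop a r)) = p" "length (take p (drop a c)) = p" using lr lc assms by auto
  have sn: "take p (drop a x) ! q = x ! (a + q)" if "length x = m" "q < p" for x :: "nat list" and q
    using that assms by simp
  have d1: "r!q = c!q" if h1: "\<forall>q<m. (q < a \<or> a + p \<le> q) \<longrightarrow> r!q = c!q"
      and h2: "\<forall>q<p. (q < b \<or> b + k \<le> q) \<longrightarrow> take p (drop a r) ! q = take p (drop a c) ! q"
      and q: "q < m" "q < a + b \<or> a + b + k \<le> q" for q
  proof (cases "q < a \<or> a + p \<le> q")
    case True thus ?thesis using h1 q by auto
  next
    case False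
    hence q2: "q - a < p" "q - a < b \<or> b + k \<le> q - a" using q by auto
    hence "take p (drop a r) ! (q - a) = take p (drop a c) ! (q - a)" using h2 by blast
    thus ?thesis using False sn[OF lr q2(1)] sn[OF lc q2(1)] by simp
  qed
  have d2: "r!q = c!q" if h: "\<forall>q<m. (q < a + b \<or> a + b + k \<le> q) \<longrightarrow> r!q = c!q"
      and q: "q < m" "q < a \<or> a + p \<le> q" for q
    using h q assms by auto
  have d3: "take p (drop a r) ! q = take p (drop a c) ! q"
    if h: "\<forall>q<m. (q < a + b \<or> a + b + k \<le> q) \<longrightarrow> r!q = c!q"
      and q: "q < p" "q < b \<or> b + k \<le> q" for q
  proof -
    have "r!(a+q) = c!(a+q)" using h q assms by auto
    thus ?thesis using sn[OF lr q(1)] sn[OF lc q(1)] by simp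
  qed
  have c1: "((\<forall>q<m. (q < a \<or> a + p \<le> q) \<longrightarrow> r!q = c!q) \<and>
            (\<forall>q<p. (q < b \<or> b + k \<le> q) \<longrightarrow> take p (drop a r) ! q = take p (drop a c) ! q))
         \<longleftrightarrow> (\<forall>q<m. (q < a + b \<or> a + b + k \<le> q) \<longrightarrow> r!q = c!q)"
    using d1 d2 d3 by blast
  have v: "take k (drop b (take p (drop a x))) = take k (drop (a+b) x)" for x :: "nat list"
    using assms by (simp add: drop_take min_def add.commute)
  show "lift a p (lift b k Y) r c = lift (a + b) k Y r c"
    apply (subst lift_alt[OF lr lc], use assms in simp)
    apply (subst lift_alt[OF l2], use assms in simp)
    apply (subst lift_alt[OF lr lc], use assms in simp)
    unfolding v by (rule ifif[OF c1])
qed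

lemma mmul_lift_same:
  assumes r: "r \<in> tidx n m" and c: "c \<in> tidx n m" and ik: "i + k \<le> m"
  shows "mmul n m (lift i k X) (lift i k Y) r c = lift i k (mmul n k X Y) r c"
proof (cases "take i r = take i c \<and> drop (i+k) r = drop (i+k) c")
  case False
  have z: "lift i k X r t * lift i k Y t c = 0" for t
    using False unfolding lift_def by auto
  have "lift i k (mmul n k X Y) r c = 0" using False by (auto simp: lift_def)
  moreover have "mmul n m (lift i k X) (lift i k Y) r c = 0" unfolding mmul_def using z by simp
  ultimately show ?thesis by simp
next
  case True
  let ?T = "{t\<in>tidx n m. take i t = take i r \<and> drop (i+k) t = drop (i+k) r}"
  define g where "g u = take i r @ u @ drop (i+k) r" for u
  have lr: "length r = m" using r by (simp add: tidx_len)
  have "mmul n m (lift i k X) (lift i k Y) r c = (\<Sum>t\<in>?T. lift i k X r t * lift i k Y t c)"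
    unfolding mmul_def
    by (rule sum.mono_neutral_right) (auto simp: lift_def)
  also have "\<dots> = (\<Sum>t\<in>?T. X (take k (drop i r)) (take k (drop i t)) * Y (take k (drop i t)) (take k (drop i c)))"
    using True by (intro sum.cong) (auto simp: lift_def)
  also have "\<dots> = (\<Sum>u\<in>tidx n k. X (take k (drop i r)) u * Y u (take k (drop i c)))"
  proof -
    have gi: "take k (drop i (g u)) = u" if "u \<in> tidx n k" for u
      using that lr ik by (simp add: g_def tidx_len)
    have bij: "bij_betw g (tidx n k) ?T"
    proof (rule bij_betw_byWitness[where f'="\<lambda>t. take k (drop i t)"])
      show "\<forall>u\<in>tidx n k. take k (drop i (g u)) = u" using gi by blast
      show "\<forall>t\<in>?T. g (take k (drop i t)) = t"
      proof
        fix t assume "t \<in> ?T"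
        hence e: "take i r = take i t" "drop (i+k) r = drop (i+k) t" by auto
        show "g (take k (drop i t)) = t"
          unfolding g_def e by (simp only: decomp3[symmetric])
      qed
      show "g ` tidx n k \<subseteq> ?T"
      proof
        fix t assume "t \<in> g ` tidx n k"
        then obtain u where u: "u \<in> tidx n k" "t = g u" by blast
        have lu: "length u = k" using u by (simp add: tidx_len)
        have "set t \<subseteq> {..<n}" using u r unfolding g_def tidx_def
          by (auto dest: in_set_takeD in_set_dropD)
        moreover have "length t = m" using u lu lr ik unfolding g_def by simp
        moreover have "take i t = take i r" using u lu lr ik unfolding g_def by simp
        moreover have "drop (i+k) t = drop (i+k) r" using u lu lr ik unfolding g_def by simp
        ultimately show "t \<in> ?T" by (simp add: tidx_def)
      qed
      show "(\<lambda>t. take k (drop i t)) ` ?T \<subseteq> tidx n k" using seg_tidx ik by blast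
    qed
    have "(\<Sum>t\<in>?T. X (take k (drop i r)) (take k (drop i t)) * Y (take k (drop i t)) (take k (drop i c)))
       = (\<Sum>u\<in>tidx n k. X (take k (drop i r)) (take k (drop i (g u))) * Y (take k (drop i (g u))) (take k (drop i c)))"
      by (rule sym, rule sum.reindex_bij_betw[OF bij, of "\<lambda>t. X (take k (drop i r)) (take k (drop i t)) * Y (take k (drop i t)) (take k (drop i c))"])
    also have "\<dots> = (\<Sum>u\<in>tidx n k. X (take k (drop i r)) u * Y u (take k (drop i c)))"
      by (rule sum.cong) (simp_all add: gi)
    finally show ?thesis .
  qed
  also have "\<dots> = lift i k (mmul n k X Y) r c" using True by (simp add: lift_def mmul_def)
  finally show ?thesis .
qed

lemma pm_lift_same:
  "i + k \<le> m \<Longrightarrow> pm n m (lift i k X) (lift i k Y) = NN n m (lift i k (pm n k X Y))"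
proof -
  assume ik: "i + k \<le> m"
  have "NN n m (lift i k (pm n k X Y)) = NN n m (lift i k (mmul n k X Y))"
    using lift_NN[OF ik] unfolding pm_def by metis
  also have "\<dots> = pm n m (lift i k X) (lift i k Y)"
    unfolding pm_def by (rule NN_cong) (simp add: mmul_lift_same ik)
  finally show ?thesis by simp
qed

lemma mmul_lift_disj:
  assumes r: "r \<in> tidx n m" and c: "c \<in> tidx n m" and d: "i + k \<le> i'" "i' + k' \<le> m"
  shows "mmul n m (lift i k X) (lift i' k' Y) r c =
    (if (\<forall>p<m. (p < i \<or> (i + k \<le> p \<and> p < i') \<or> i' + k' \<le> p) \<longrightarrow> r!p = c!p)
     then X (take k (drop i r)) (take k (drop i c)) * Y (take k' (drop i' r)) (take k' (drop i' c)) else 0)"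
proof -
  have lr: "length r = m" and lc: "length c = m" using r c by (auto simp: tidx_len)
  define t0 where "t0 = map (\<lambda>p. if i' \<le> p \<and> p < i' + k' then r!p else c!p) [0..<m]"
  have lt0: "length t0 = m" by (simp add: t0_def)
  have t0n: "t0 ! p = (if i' \<le> p \<and> p < i' + k' then r!p else c!p)" if "p < m" for p
    using that by (simp add: t0_def)
  have t0i: "t0 \<in> tidx n m"
  proof -
    have "set t0 \<subseteq> {..<n}"
    proof
      fix x assume "x \<in> set t0"
      then obtain p where p: "p < m" "x = t0 ! p" by (metis in_set_conv_nth lt0)
      thus "x \<in> {..<n}" using r c lr lc t0n[OF p(1)] unfolding tidx_def
        by (auto simp: subset_iff nth_mem split: if_splits)
    qed
    thus ?thesis using lt0 by (simp add: tidx_def)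
  qed
  have ik: "i + k \<le> m" and ik': "i' + k' \<le> m" using d by auto
  have uniq: "t = t0" if t: "t \<in> tidx n m" and nz: "lift i k X r t * lift i' k' Y t c \<noteq> 0" for t
  proof -
    have lt: "length t = m" using t by (simp add: tidx_len)
    have h1: "\<forall>p<m. (p < i \<or> i + k \<le> p) \<longrightarrow> r!p = t!p"
      using nz lift_alt[OF lr lt ik, of X] by (auto split: if_splits)
    have h2: "\<forall>p<m. (p < i' \<or> i' + k' \<le> p) \<longrightarrow> t!p = c!p"
      using nz lift_alt[OF lt lc ik', of Y] by (auto split: if_splits)
    show ?thesis
    proof (rule nth_equalityI)
      show "length t = length t0" using lt lt0 by simp
      fix p assume "p < length t"
      hence p: "p < m" using lt by simp
      show "t ! p = t0 ! p"
      proof (cases "i' \<le> p \<and> p < i' + k'")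
        case True thus ?thesis using h1 p d t0n[OF p] by auto
      next
        case False thus ?thesis using h2 p t0n[OF p] by auto
      qed
    qed
  qed
  have "mmul n m (lift i k X) (lift i' k' Y) r c = lift i k X r t0 * lift i' k' Y t0 c"
    unfolding mmul_def by (rule sum_single[OF finite_tidx t0i]) (use uniq in blast)
  also have "\<dots> = (if (\<forall>p<m. (p < i \<or> (i + k \<le> p \<and> p < i') \<or> i' + k' \<le> p) \<longrightarrow> r!p = c!p)
     then X (take k (drop i r)) (take k (drop i c)) * Y (take k' (drop i' r)) (take k' (drop i' c)) else 0)"
  proof -
    have c1: "(\<forall>p<m. (p < i \<or> i + k \<le> p) \<longrightarrow> r!p = t0!p) \<longleftrightarrow>
              (\<forall>p<m. (p < i \<or> (i + k \<le> p \<and> p < i') \<or> i' + k' \<le> p) \<longrightarrow> r!p = c!p)"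
      using t0n d by auto
    have c2: "(\<forall>p<m. (p < i' \<or> i' + k' \<le> p) \<longrightarrow> t0!p = c!p)" using t0n by auto
    have s1: "take k (drop i t0) = take k (drop i c)"
      by (rule seg_eq[OF lc lt0 ik]) (use t0n d in auto)
    have s2: "take k' (drop i' t0) = take k' (drop i' r)"
      by (rule seg_eq[OF lr lt0 ik']) (use t0n d in auto)
    show ?thesis
      unfolding lift_alt[OF lr lt0 ik] lift_alt[OF lt0 lc ik'] c1 s1 s2 using c2 by auto
  qed
  finally show ?thesis .
qed

lemma mmul_lift_disj2:
  assumes r: "r \<in> tidx n m" and c: "c \<in> tidx n m" and d: "i + k \<le> i'" "i' + k' \<le> m"
  shows "mmul n m (lift i' k' Y) (lift i k X) r c =
    (if (\<forall>p<m. (p < i \<or> (i + k \<le> p \<and> p < i') \<or> i' + k' \<le> p) \<longrightarrow> r!p = c!p)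
     then Y (take k' (drop i' r)) (take k' (drop i' c)) * X (take k (drop i r)) (take k (drop i c)) else 0)"
proof -
  have lr: "length r = m" and lc: "length c = m" using r c by (auto simp: tidx_len)
  define t0 where "t0 = map (\<lambda>p. if i \<le> p \<and> p < i + k then r!p else c!p) [0..<m]"
  have lt0: "length t0 = m" by (simp add: t0_def)
  have t0n: "t0 ! p = (if i \<le> p \<and> p < i + k then r!p else c!p)" if "p < m" for p
    using that by (simp add: t0_def)
  have t0i: "t0 \<in> tidx n m"
  proof -
    have "set t0 \<subseteq> {..<n}"
    proof
      fix x assume "x \<in> set t0"
      then obtain p where p: "p < m" "x = t0 ! p" by (metis in_set_conv_nth lt0)
      thus "x \<in> {..<n}" using r c lr lc t0n[OF p(1)] unfolding tidx_def
        by (auto simp: subset_iff nth_mem split: if_splits)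
    qed
    thus ?thesis using lt0 by (simp add: tidx_def)
  qed
  have ik: "i + k \<le> m" and ik': "i' + k' \<le> m" using d by auto
  have uniq: "t = t0" if t: "t \<in> tidx n m" and nz: "lift i' k' Y r t * lift i k X t c \<noteq> 0" for t
  proof -
    have lt: "length t = m" using t by (simp add: tidx_len)
    have h1: "\<forall>p<m. (p < i' \<or> i' + k' \<le> p) \<longrightarrow> r!p = t!p"
      using nz lift_alt[OF lr lt ik', of Y] by (auto split: if_splits)
    have h2: "\<forall>p<m. (p < i \<or> i + k \<le> p) \<longrightarrow> t!p = c!p"
      using nz lift_alt[OF lt lc ik, of X] by (auto split: if_splits)
    show ?thesis
    proof (rule nth_equalityI)
      show "length t = length t0" using lt lt0 by simp
      fix p assume "p < length t"
      hence p: "p < m" using lt by simp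
      show "t ! p = t0 ! p"
      proof (cases "i \<le> p \<and> p < i + k")
        case True thus ?thesis using h1 p d t0n[OF p] by auto
      next
        case False thus ?thesis using h2 p t0n[OF p] by auto
      qed
    qed
  qed
  have "mmul n m (lift i' k' Y) (lift i k X) r c = lift i' k' Y r t0 * lift i k X t0 c"
    unfolding mmul_def by (rule sum_single[OF finite_tidx t0i]) (use uniq in blast)
  also have "\<dots> = (if (\<forall>p<m. (p < i \<or> (i + k \<le> p \<and> p < i') \<or> i' + k' \<le> p) \<longrightarrow> r!p = c!p)
     then Y (take k' (drop i' r)) (take k' (drop i' c)) * X (take k (drop i r)) (take k (drop i c)) else 0)"
  proof -
    have c1: "(\<forall>p<m. (p < i' \<or> i' + k' \<le> p) \<longrightarrow> r!p = t0!p) \<longleftrightarrow>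
              (\<forall>p<m. (p < i \<or> (i + k \<le> p \<and> p < i') \<or> i' + k' \<le> p) \<longrightarrow> r!p = c!p)"
      using t0n d by auto
    have c2: "(\<forall>p<m. (p < i \<or> i + k \<le> p) \<longrightarrow> t0!p = c!p)" using t0n by auto
    have s1: "take k' (drop i' t0) = take k' (drop i' c)"
      by (rule seg_eq[OF lc lt0 ik']) (use t0n d in auto)
    have s2: "take k (drop i t0) = take k (drop i r)"
      by (rule seg_eq[OF lr lt0 ik]) (use t0n d in auto)
    show ?thesis
      unfolding lift_alt[OF lr lt0 ik'] lift_alt[OF lt0 lc ik] c1 s1 s2 using c2 by auto
  qed
  finally show ?thesis .
qed

lemma pm_lift_disj:
  assumes d: "i + k \<le> i'" "i' + k' \<le> m"
    and cm: "\<And>a b a' b'. X a b * Y a' b' = Y a' b' * X a b"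
  shows "pm n m (lift i k X) (lift i' k' Y) = pm n m (lift i' k' Y) (lift i k (X::'b::semiring_1 op))"
  unfolding pm_def
  by (rule NN_cong) (auto simp: mmul_lift_disj mmul_lift_disj2 d cm)

definition ahom :: "(complex \<Rightarrow> 'b::ring_1) \<Rightarrow> bool" where
  "ahom \<iota> \<longleftrightarrow> (\<forall>a b. \<iota> (a + b) = \<iota> a + \<iota> b) \<and> (\<forall>a b. \<iota> (a * b) = \<iota> a * \<iota> b) \<and> \<iota> 1 = 1"

lemma ahom_add: "ahom \<iota> \<Longrightarrow> \<iota> (a + b) = \<iota> a + \<iota> b" unfolding ahom_def by blast
lemma ahom_0: "ahom \<iota> \<Longrightarrow> \<iota> 0 = 0"
proof -
  assume h: "ahom \<iota>"
  have "\<iota> 0 + \<iota> 0 = \<iota> 0 + 0" using ahom_add[OF h, of 0 0] by simp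
  thus ?thesis by simp
qed
lemma ahom_mult: "ahom \<iota> \<Longrightarrow> \<iota> (a * b) = \<iota> a * \<iota> b" unfolding ahom_def by blast
lemma ahom_1: "ahom \<iota> \<Longrightarrow> \<iota> 1 = 1" unfolding ahom_def by blast
lemma ahom_diff: "ahom \<iota> \<Longrightarrow> \<iota> (a - b) = \<iota> a - \<iota> b"
proof -
  assume h: "ahom \<iota>"
  have "\<iota> a = \<iota> (a - b) + \<iota> b" using ahom_add[OF h, of "a - b" b] by simp
  thus ?thesis by (simp add: algebra_simps)
qed
lemma ahom_sum: "ahom \<iota> \<Longrightarrow> \<iota> (sum f S) = sum (\<lambda>x. \<iota> (f x)) S"
proof -
  assume h: "ahom \<iota>"
  show ?thesis using sum_comp_morphism[of \<iota> f S, OF ahom_0[OF h] ahom_add[OF h]] by (simp add: comp_def)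
qed

lemma cmap_app[simp]: "cmap \<iota> X r c = \<iota> (X r c)" by (simp add: cmap_def)

lemma cmap_lift: "ahom \<iota> \<Longrightarrow> cmap \<iota> (lift i k Z) = lift i k (cmap \<iota> Z)"
  by (simp add: fun_eq_iff lift_def ahom_0)
lemma cmap_mmul: "ahom \<iota> \<Longrightarrow> cmap \<iota> (mmul n m X Y) = mmul n m (cmap \<iota> X) (cmap \<iota> Y)"
  by (simp add: fun_eq_iff mmul_def ahom_sum ahom_mult)
lemma cmap_NN: "ahom \<iota> \<Longrightarrow> cmap \<iota> (NN n m X) = NN n m (cmap \<iota> X)"
  by (simp add: fun_eq_iff NN_def ahom_0)
lemma cmap_pm: "ahom \<iota> \<Longrightarrow> cmap \<iota> (pm n m X Y) = pm n m (cmap \<iota> X) (cmap \<iota> Y)"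
  unfolding pm_def by (simp only: cmap_NN cmap_mmul)
lemma cmap_idm: "ahom \<iota> \<Longrightarrow> cmap \<iota> idm = idm"
  by (simp add: fun_eq_iff idm_def ahom_0 ahom_1)
lemma cmap_padd: "ahom \<iota> \<Longrightarrow> cmap \<iota> (padd X Y) = padd (cmap \<iota> X) (cmap \<iota> Y)"
  by (simp add: fun_eq_iff ahom_add)
lemma cmap_psub: "ahom \<iota> \<Longrightarrow> cmap \<iota> (psub X Y) = psub (cmap \<iota> X) (cmap \<iota> Y)"
  by (simp add: fun_eq_iff ahom_diff)
lemma cmap_smul: "ahom \<iota> \<Longrightarrow> cmap \<iota> (smul a X) = smul (\<iota> a) (cmap \<iota> X)"
  by (simp add: fun_eq_iff ahom_mult)
lemma cmap_zero: "ahom \<iota> \<Longrightarrow> cmap \<iota> (\<lambda>_ _. 0) = (\<lambda>_ _. 0)"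
  by (simp add: fun_eq_iff ahom_0)

lemma lift3:
  "j + 3 \<le> m \<Longrightarrow> NN n m (lift j 3 (pm n 3 (pm n 3 a b) c)) = pm n m (pm n m (lift j 3 a) (lift j 3 b)) (lift j 3 c)"
proof -
  assume h: "j + 3 \<le> m"
  have "NN n m (lift j 3 (pm n 3 (pm n 3 a b) c)) = pm n m (lift j 3 (pm n 3 a b)) (lift j 3 c)"
    by (rule pm_lift_same[OF h, symmetric])
  also have "\<dots> = pm n m (NN n m (lift j 3 (pm n 3 a b))) (lift j 3 c)" by (rule pm_NN_left[symmetric])
  also have "\<dots> = pm n m (pm n m (lift j 3 a) (lift j 3 b)) (lift j 3 c)"
    by (simp only: pm_lift_same[OF h, symmetric])
  finally show ?thesis .
qed

lemma pm_nest_left: "b + k \<le> p \<Longrightarrow> a + p \<le> m \<Longrightarrow> pm n m (lift a p (lift b k Y)) X = pm n m (lift (a+b) k Y) X"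
  by (metis lift_nest pm_NN_left)
lemma pm_nest_right: "b + k \<le> p \<Longrightarrow> a + p \<le> m \<Longrightarrow> pm n m X (lift a p (lift b k Y)) = pm n m X (lift (a+b) k Y)"
  by (metis lift_nest pm_NN_right)

lemma rel3_lift:
  assumes h: "pm n 3 (pm n 3 (lift 0 2 X) (lift 1 2 Y)) (lift 0 2 Z) = pm n 3 (pm n 3 (lift 1 2 X') (lift 0 2 Y')) (lift 1 2 Z')"
    and jm: "j + 3 \<le> m"
  shows "pm n m (pm n m (lift j 2 X) (lift (j+1) 2 Y)) (lift j 2 Z) = pm n m (pm n m (lift (j+1) 2 X') (lift j 2 Y')) (lift (j+1) 2 Z')"
proof -
  have "NN n m (lift j 3 (pm n 3 (pm n 3 (lift 0 2 X) (lift 1 2 Y)) (lift 0 2 Z))) =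
        NN n m (lift j 3 (pm n 3 (pm n 3 (lift 1 2 X') (lift 0 2 Y')) (lift 1 2 Z')))" using h by simp
  hence e: "pm n m (pm n m (lift j 3 (lift 0 2 X)) (lift j 3 (lift 1 2 Y))) (lift j 3 (lift 0 2 Z)) =
        pm n m (pm n m (lift j 3 (lift 1 2 X')) (lift j 3 (lift 0 2 Y'))) (lift j 3 (lift 1 2 Z'))"
    unfolding lift3[OF jm] .
  show ?thesis using e
    by (simp add: pm_nest_left pm_nest_right jm)
qed

lemma rel2_lift:
  assumes h: "pm n 2 X Y = NN n 2 W" and jm: "j + 2 \<le> m"
  shows "pm n m (lift j 2 X) (lift j 2 Y) = NN n m (lift j 2 W)"
  using pm_lift_same[OF jm, of n X Y] h lift_NN[OF jm] by metis

lemma NN_lift_eq2: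
  assumes h: "NN n 2 X = NN n 2 W" and jm: "j + 2 \<le> m"
  shows "NN n m (lift j 2 X) = NN n m (lift j 2 W)"
  using h lift_NN_cong[OF jm] by blast

locale setting =
  fixes n :: nat and q :: complex and R F Fi S2 A2 :: "complex op"
    and \<iota> :: "complex \<Rightarrow> 'a::ring_1" and M :: "'a op"
  assumes hom: "ahom \<iota>"
    and central: "\<And>a x. \<iota> a * x = x * \<iota> a"
    and q_nz: "q \<noteq> 0"
    and c2_nz: "q + inverse q \<noteq> 0"
    and Finv1: "pm n 2 F Fi = NN n 2 idm"
    and Finv2: "pm n 2 Fi F = NN n 2 idm"
    and i1: "pm n 3 (pm n 3 (lift 0 2 R) (lift 1 2 R)) (lift 0 2 R) = pm n 3 (pm n 3 (lift 1 2 R) (lift 0 2 R)) (lift 1 2 R)"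
    and i2: "pm n 3 (pm n 3 (lift 0 2 F) (lift 1 2 F)) (lift 0 2 F) = pm n 3 (pm n 3 (lift 1 2 F) (lift 0 2 F)) (lift 1 2 F)"
    and i3: "pm n 3 (pm n 3 (lift 0 2 R) (lift 1 2 F)) (lift 0 2 F) = pm n 3 (pm n 3 (lift 1 2 F) (lift 0 2 F)) (lift 1 2 R)"
    and i4: "pm n 3 (pm n 3 (lift 0 2 F) (lift 1 2 F)) (lift 0 2 R) = pm n 3 (pm n 3 (lift 1 2 R) (lift 0 2 F)) (lift 1 2 F)"
    and Aidem: "pm n 2 A2 A2 = NN n 2 A2"
    and Sdef: "NN n 2 S2 = NN n 2 (psub idm A2)"
    and Rdef: "NN n 2 R = NN n 2 (psub (smul q idm) (smul (q + inverse q) A2))"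
    and hq: "pm n 2 (pm n 2 (pm n 2 (cmap \<iota> S2) (lift 0 1 M)) (Mbar n 2 \<iota> F Fi M 2)) (cmap \<iota> A2) = (\<lambda>_ _. 0)"
begin

abbreviation "c2 \<equiv> q + inverse q"
definition "Ix m = NN n m (idm::complex op)"
definition "Rm m j = NN n m (lift j 2 R)"
definition "Am m j = NN n m (lift j 2 A2)"
definition "Sm m j = NN n m (lift j 2 S2)"
definition "Fm m j = NN n m (lift j 2 F)"
definition "Fim m j = NN n m (lift j 2 Fi)"

lemmas nrm_defs = Ix_def Rm_def Am_def Sm_def Fm_def Fim_def

lemma NN_nrm[simp]: "NN n m (Ix m) = Ix m" "NN n m (Rm m j) = Rm m j" "NN n m (Am m j) = Am m j"
  "NN n m (Sm m j) = Sm m j" "NN n m (Fm m j) = Fm m j" "NN n m (Fim m j) = Fim m j"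
  by (simp_all add: nrm_defs)

lemma pm_I[simp]: "pm n m (Ix m) X = NN n m X" "pm n m X (Ix m) = NN n m (X::complex op)"
  by (simp_all add: Ix_def)

lemma F_inv: "j + 2 \<le> m \<Longrightarrow> pm n m (Fm m j) (Fim m j) = Ix m"
  "j + 2 \<le> m \<Longrightarrow> pm n m (Fim m j) (Fm m j) = Ix m"
  unfolding nrm_defs pm_NN_left pm_NN_right
  by (simp_all add: rel2_lift Finv1 Finv2)

lemma rel3': "j + 3 \<le> m \<Longrightarrow>
  pm n 3 (pm n 3 (lift 0 2 X) (lift 1 2 Y)) (lift 0 2 Z) = pm n 3 (pm n 3 (lift 1 2 X') (lift 0 2 Y')) (lift 1 2 Z') \<Longrightarrow>
  pm n m (pm n m (NN n m (lift j 2 X)) (NN n m (lift (j+1) 2 Y))) (NN n m (lift j 2 Z)) =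
  pm n m (pm n m (NN n m (lift (j+1) 2 X')) (NN n m (lift j 2 Y'))) (NN n m (lift (j+1) 2 Z'))"
  using rel3_lift by simp

lemma braidR: "j + 3 \<le> m \<Longrightarrow> pm n m (pm n m (Rm m j) (Rm m (j+1))) (Rm m j) = pm n m (pm n m (Rm m (j+1)) (Rm m j)) (Rm m (j+1))"
  unfolding nrm_defs using rel3'[OF _ i1] by blast
lemma braidF: "j + 3 \<le> m \<Longrightarrow> pm n m (pm n m (Fm m j) (Fm m (j+1))) (Fm m j) = pm n m (pm n m (Fm m (j+1)) (Fm m j)) (Fm m (j+1))"
  unfolding nrm_defs using rel3'[OF _ i2] by blast
lemma i3R: "j + 3 \<le> m \<Longrightarrow> pm n m (pm n m (Rm m j) (Fm m (j+1))) (Fm m j) = pm n m (pm n m (Fm m (j+1)) (Fm m j)) (Rm m (j+1))"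
  unfolding nrm_defs using rel3'[OF _ i3] by blast
lemma i4R: "j + 3 \<le> m \<Longrightarrow> pm n m (pm n m (Fm m j) (Fm m (j+1))) (Rm m j) = pm n m (pm n m (Rm m (j+1)) (Fm m j)) (Fm m (j+1))"
  unfolding nrm_defs using rel3'[OF _ i4] by blast

lemma A_idem: "j + 2 \<le> m \<Longrightarrow> pm n m (Am m j) (Am m j) = Am m j"
  unfolding Am_def pm_NN_left pm_NN_right by (simp add: rel2_lift Aidem)

lemma R_A: "j + 2 \<le> m \<Longrightarrow> Rm m j = psub (smul q (Ix m)) (smul c2 (Am m j))"
  unfolding Rm_def Am_def Ix_def
  using NN_lift_eq2[OF Rdef, of j m]
  by (simp add: lift_psub lift_smul NN_psub NN_smul)

lemma S_A: "j + 2 \<le> m \<Longrightarrow> Sm m j = psub (Ix m) (Am m j)"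
  unfolding Sm_def Am_def Ix_def
  using NN_lift_eq2[OF Sdef, of j m]
  by (simp add: lift_psub NN_psub)

lemma A_R: "j + 2 \<le> m \<Longrightarrow> Am m j = smul (inverse c2) (psub (smul q (Ix m)) (Rm m j))"
proof -
  assume h: "j + 2 \<le> m"
  show ?thesis unfolding R_A[OF h] using c2_nz by (simp add: fun_eq_iff field_simps)
qed

lemma S_R: "j + 2 \<le> m \<Longrightarrow> Sm m j = smul (inverse c2) (padd (smul (inverse q) (Ix m)) (Rm m j))"
proof -
  assume h: "j + 2 \<le> m"
  have e: "inverse c2 * (inverse q * x + (q * x - c2 * y)) = x - y" for x y
  proof -
    have "inverse q * x + (q * x - c2 * y) = c2 * (x - y)" by (simp add: algebra_simps)
    thus ?thesis using c2_nz by simp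
  qed
  show ?thesis unfolding S_A[OF h] R_A[OF h] by (simp add: fun_eq_iff e)
qed

end

context setting begin

lemmas dist = pm_smul_left pm_smul_right_c pm_psub_left pm_psub_right pm_padd_left pm_padd_right

lemma hecke: "j + 2 \<le> m \<Longrightarrow> pm n m (Rm m j) (Rm m j) = padd (smul (q - inverse q) (Rm m j)) (Ix m)"
proof -
  assume h: "j + 2 \<le> m"
  show ?thesis
    unfolding R_A[OF h] apply (simp add: dist A_idem[OF h])
    apply (rule ext)+ using q_nz by (simp add: field_simps)
qed

lemma i3A: "j + 3 \<le> m \<Longrightarrow> pm n m (pm n m (Am m j) (Fm m (j+1))) (Fm m j) = pm n m (pm n m (Fm m (j+1)) (Fm m j)) (Am m (j+1))"
  using A_R[of j m] A_R[of "j+1" m] i3R[of j m] by (simp add: dist)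
lemma i3S: "j + 3 \<le> m \<Longrightarrow> pm n m (pm n m (Sm m j) (Fm m (j+1))) (Fm m j) = pm n m (pm n m (Fm m (j+1)) (Fm m j)) (Sm m (j+1))"
  using S_R[of j m] S_R[of "j+1" m] i3R[of j m] by (simp add: dist)
lemma i4A: "j + 3 \<le> m \<Longrightarrow> pm n m (pm n m (Fm m j) (Fm m (j+1))) (Am m j) = pm n m (pm n m (Am m (j+1)) (Fm m j)) (Fm m (j+1))"
  using A_R[of j m] A_R[of "j+1" m] i4R[of j m] by (simp add: dist)
lemma i4S: "j + 3 \<le> m \<Longrightarrow> pm n m (pm n m (Fm m j) (Fm m (j+1))) (Sm m j) = pm n m (pm n m (Sm m (j+1)) (Fm m j)) (Fm m (j+1))"
  using S_R[of j m] S_R[of "j+1" m] i4R[of j m] by (simp add: dist)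

end

lemma comm_prod: "pm n m X A = pm n m A X \<Longrightarrow> pm n m X B = pm n m B X \<Longrightarrow>
   pm n m X (pm n m A B) = pm n m (pm n m A B) X"
  by (metis pm_assoc)

lemma rassoc: "pm n m A B = W \<Longrightarrow> pm n m A (pm n m B Y) = pm n m W Y"
  by (metis pm_assoc)

lemma comm_inv:
  assumes c: "pm n m X F = pm n m F X" and i1: "pm n m F Fi = NN n m idm" and i2: "pm n m Fi F = NN n m idm"
  shows "pm n m X Fi = pm n m Fi (X::'b::semiring_1 op)"
proof -
  have "pm n m Fi X = pm n m (pm n m Fi X) (pm n m F Fi)" using i1 by simp
  also have "\<dots> = pm n m Fi (pm n m (pm n m X F) Fi)" by (simp add: pm_assoc)
  also have "\<dots> = pm n m Fi (pm n m (pm n m F X) Fi)" using c by simp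
  also have "\<dots> = pm n m (pm n m Fi F) (pm n m X Fi)" by (simp add: pm_assoc)
  also have "\<dots> = pm n m X Fi" using i2 by simp
  finally show ?thesis by simp
qed

context setting begin

abbreviation "C \<equiv> cmap \<iota>"
definition "Mb m l = NN n m (Mbar n m \<iota> F Fi M l)"

lemma NN_Mb[simp]: "NN n m (Mb m l) = Mb m l" by (simp add: Mb_def)
lemma NN_C[simp]: "NN n m (C (NN n m X)) = C (NN n m X)"
  using cmap_NN[OF hom] by (metis NN_NN)

lemma Mb1: "Mb m 1 = NN n m (lift 0 1 M)" by (simp add: Mb_def)
lemma MbS: "Mb m (Suc (Suc k)) = pm n m (pm n m (C (Fm m k)) (Mb m (Suc k))) (C (Fim m k))"
proof -
  have "Mb m (Suc (Suc k)) = pm n m (pm n m (C (lift k 2 F)) (Mbar n m \<iota> F Fi M (Suc k))) (C (lift k 2 Fi))"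
    by (simp add: Mb_def)
  also have "\<dots> = pm n m (pm n m (NN n m (C (lift k 2 F))) (NN n m (Mbar n m \<iota> F Fi M (Suc k)))) (NN n m (C (lift k 2 Fi)))"
    by simp
  finally show ?thesis unfolding Mb_def Fm_def Fim_def cmap_NN[OF hom] .
qed

lemma C_pm: "C (pm n m X Y) = pm n m (C X) (C Y)" by (rule cmap_pm[OF hom])
lemma C_Ix: "C (Ix m) = NN n m idm" unfolding Ix_def cmap_NN[OF hom] cmap_idm[OF hom] ..

lemma C_eq: "X = Y \<Longrightarrow> C X = C Y" by simp

lemma C_disj1: "j + k \<le> p \<Longrightarrow> p + 2 \<le> m \<Longrightarrow>
   pm n m (lift j k X) (C (NN n m (lift p 2 Z))) = pm n m (C (NN n m (lift p 2 Z))) (lift j k X)"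
  unfolding cmap_NN[OF hom] pm_NN_left pm_NN_right cmap_lift[OF hom]
  by (rule pm_lift_disj) (simp_all add: central)
lemma C_disj2: "p + 2 \<le> j \<Longrightarrow> j + k \<le> m \<Longrightarrow>
   pm n m (lift j k X) (C (NN n m (lift p 2 Z))) = pm n m (C (NN n m (lift p 2 Z))) (lift j k X)"
  unfolding cmap_NN[OF hom] pm_NN_left pm_NN_right cmap_lift[OF hom]
  by (rule pm_lift_disj[symmetric]) (simp_all add: central)

lemma CC_disj: "j + 2 \<le> p \<Longrightarrow> p + 2 \<le> m \<Longrightarrow>
   pm n m (C (NN n m (lift j 2 Z'))) (C (NN n m (lift p 2 Z))) = pm n m (C (NN n m (lift p 2 Z))) (C (NN n m (lift j 2 Z')))"
proof -
  assume h: "j + 2 \<le> p" "p + 2 \<le> m"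
  have "pm n m (C (NN n m (lift j 2 Z'))) (C (NN n m (lift p 2 Z))) = pm n m (lift j 2 (C Z')) (C (NN n m (lift p 2 Z)))"
    unfolding cmap_NN[OF hom] pm_NN_left cmap_lift[OF hom] ..
  also have "\<dots> = pm n m (C (NN n m (lift p 2 Z))) (lift j 2 (C Z'))" by (rule C_disj1[OF h])
  also have "\<dots> = pm n m (C (NN n m (lift p 2 Z))) (C (NN n m (lift j 2 Z')))"
    unfolding cmap_NN[OF hom] pm_NN_right cmap_lift[OF hom] ..
  finally show ?thesis .
qed

lemma F1: "1 \<le> l \<Longrightarrow> l \<le> p \<Longrightarrow> p + 2 \<le> m \<Longrightarrow>
   pm n m (C (NN n m (lift p 2 Z))) (Mb m l) = pm n m (Mb m l) (C (NN n m (lift p 2 Z)))"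
proof (induction l rule: nat_induct_at_least)
  case base
  show ?case unfolding Mb1 pm_NN_left pm_NN_right using C_disj1[of 0 1 p m M Z] base by simp
next
  case (Suc l)
  then obtain k where k: "l = Suc k" by (cases l) auto
  have a: "pm n m (C (NN n m (lift p 2 Z))) (C (Fm m k)) = pm n m (C (Fm m k)) (C (NN n m (lift p 2 Z)))"
    unfolding Fm_def using CC_disj[of k p m F Z] Suc k by simp
  have b: "pm n m (C (NN n m (lift p 2 Z))) (C (Fim m k)) = pm n m (C (Fim m k)) (C (NN n m (lift p 2 Z)))"
    unfolding Fim_def using CC_disj[of k p m Fi Z] Suc k by simp
  have c: "pm n m (C (NN n m (lift p 2 Z))) (Mb m l) = pm n m (Mb m l) (C (NN n m (lift p 2 Z)))"
    using Suc.prems by (intro Suc.IH) auto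
  show ?case unfolding k MbS using comm_prod[OF comm_prod[OF a c[unfolded k]] b] .
qed

end

context setting begin

lemma FF_inv: "p + 3 \<le> m \<Longrightarrow> pm n m (pm n m (Fm m (p+1)) (Fm m p)) (pm n m (Fim m p) (Fim m (p+1))) = Ix m"
  "p + 3 \<le> m \<Longrightarrow> pm n m (pm n m (Fim m p) (Fim m (p+1))) (pm n m (Fm m (p+1)) (Fm m p)) = Ix m"
  by (simp_all add: pm_assoc rassoc[OF F_inv(1)[of p m]] rassoc[OF F_inv(2)[of "Suc p" m]] rassoc[OF F_inv(1)[of "Suc p" m]] rassoc[OF F_inv(2)[of p m]] F_inv)

lemma F2:
  assumes i3Z: "pm n m (pm n m (NN n m (lift p 2 Z)) (Fm m (p+1))) (Fm m p) =
                pm n m (pm n m (Fm m (p+1)) (Fm m p)) (NN n m (lift (p+1) 2 Z))"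
    and l: "p + 3 \<le> l" "l \<le> m"
  shows "pm n m (C (NN n m (lift p 2 Z))) (Mb m l) = pm n m (Mb m l) (C (NN n m (lift p 2 Z)))"
  using l
proof (induction l rule: nat_induct_at_least)
  case base
  define Zp where "Zp = C (NN n m (lift p 2 Z))"
  define Zq where "Zq = C (NN n m (lift (p+1) 2 Z))"
  define G where "G = pm n m (C (Fm m (p+1))) (C (Fm m p))"
  define Gi where "Gi = pm n m (C (Fim m p)) (C (Fim m (p+1)))"
  have m3: "p + 3 \<le> m" using base by simp
  have Mb3: "Mb m (p+3) = pm n m (pm n m G (Mb m (p+1))) Gi"
  proof -
    have "Mb m (p+3) = pm n m (pm n m (C (Fm m (p+1))) (pm n m (pm n m (C (Fm m p)) (Mb m (Suc p))) (C (Fim m p)))) (C (Fim m (p+1)))"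
      using MbS[of m "p+1"] MbS[of m p] by (simp add: numeral_3_eq_3)
    thus ?thesis unfolding G_def Gi_def by (simp add: pm_assoc)
  qed
  have ZG: "pm n m Zp G = pm n m G Zq"
    using C_eq[OF i3Z] unfolding Zp_def Zq_def G_def C_pm by (simp add: pm_assoc)
  have GGi: "pm n m G Gi = NN n m idm" "pm n m Gi G = NN n m idm"
    using C_eq[OF FF_inv(1)[OF m3]] C_eq[OF FF_inv(2)[OF m3]] unfolding G_def Gi_def C_pm C_Ix .
  have nZ: "NN n m Zp = Zp" "NN n m Zq = Zq" unfolding Zp_def Zq_def by simp_all
  have ZGi: "pm n m Zq Gi = pm n m Gi Zp"
  proof -
    have "pm n m Gi Zp = pm n m (pm n m Gi Zp) (pm n m G Gi)" using GGi nZ by simp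
    also have "\<dots> = pm n m Gi (pm n m (pm n m Zp G) Gi)" by (simp add: pm_assoc)
    also have "\<dots> = pm n m Gi (pm n m (pm n m G Zq) Gi)" using ZG by simp
    also have "\<dots> = pm n m (pm n m Gi G) (pm n m Zq Gi)" by (simp add: pm_assoc)
    also have "\<dots> = pm n m Zq Gi" using GGi by simp
    finally show ?thesis by simp
  qed
  have ZM: "pm n m Zq (Mb m (p+1)) = pm n m (Mb m (p+1)) Zq"
    unfolding Zq_def by (rule F1) (use m3 in auto)
  have "pm n m Zp (Mb m (p+3)) = pm n m (pm n m Zp G) (pm n m (Mb m (p+1)) Gi)"
    unfolding Mb3 by (simp add: pm_assoc)
  also have "\<dots> = pm n m G (pm n m (pm n m Zq (Mb m (p+1))) Gi)" unfolding ZG by (simp add: pm_assoc)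
  also have "\<dots> = pm n m G (pm n m (Mb m (p+1)) (pm n m Zq Gi))" unfolding ZM by (simp add: pm_assoc)
  also have "\<dots> = pm n m (Mb m (p+3)) Zp" unfolding ZGi Mb3 by (simp add: pm_assoc)
  finally show ?case unfolding Zp_def .
next
  case (Suc l)
  then obtain k where k: "l = Suc k" by (cases l) auto
  have a: "pm n m (C (NN n m (lift p 2 Z))) (C (Fm m k)) = pm n m (C (Fm m k)) (C (NN n m (lift p 2 Z)))"
    unfolding Fm_def using CC_disj[of p k m Z F] Suc k by simp
  have b: "pm n m (C (NN n m (lift p 2 Z))) (C (Fim m k)) = pm n m (C (Fim m k)) (C (NN n m (lift p 2 Z)))"
    unfolding Fim_def using CC_disj[of p k m Z Fi] Suc k by simp
  have c: "pm n m (C (NN n m (lift p 2 Z))) (Mb m l) = pm n m (Mb m l) (C (NN n m (lift p 2 Z)))"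
    using Suc.prems by (intro Suc.IH) auto
  show ?case unfolding k MbS using comm_prod[OF comm_prod[OF a c[unfolded k]] b] .
qed

lemma F2A: "p + 3 \<le> l \<Longrightarrow> l \<le> m \<Longrightarrow> pm n m (C (Am m p)) (Mb m l) = pm n m (Mb m l) (C (Am m p))"
  unfolding Am_def by (rule F2) (use i3A[of p m] in \<open>simp_all add: Am_def\<close>)
lemma F2S: "p + 3 \<le> l \<Longrightarrow> l \<le> m \<Longrightarrow> pm n m (C (Sm m p)) (Mb m l) = pm n m (Mb m l) (C (Sm m p))"
  unfolding Sm_def by (rule F2) (use i3S[of p m] in \<open>simp_all add: Sm_def\<close>)
lemma F2F: "p + 3 \<le> l \<Longrightarrow> l \<le> m \<Longrightarrow> pm n m (C (Fm m p)) (Mb m l) = pm n m (Mb m l) (C (Fm m p))"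
  unfolding Fm_def by (rule F2) (use braidF[of p m] in \<open>simp_all add: Fm_def\<close>)
lemma F2Fi: "p + 3 \<le> l \<Longrightarrow> l \<le> m \<Longrightarrow> pm n m (C (Fim m p)) (Mb m l) = pm n m (Mb m l) (C (Fim m p))"
proof -
  assume h: "p + 3 \<le> l" "l \<le> m"
  have i1: "pm n m (C (Fm m p)) (C (Fim m p)) = NN n m idm" using C_eq[OF F_inv(1)[of p m]] h
    unfolding C_pm C_Ix by simp
  have i2: "pm n m (C (Fim m p)) (C (Fm m p)) = NN n m idm" using C_eq[OF F_inv(2)[of p m]] h
    unfolding C_pm C_Ix by simp
  show ?thesis using comm_inv[OF F2F[OF h, symmetric] i1 i2] by simp
qed

end

lemma NNlift_mmul: "i + k \<le> m \<Longrightarrow> NN n m (lift i k (mmul n k X Y)) = pm n m (lift i k X) (lift i k Y)"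
  by (metis NN_mmul lift_NN pm_lift_same)

context setting begin

lemma claim1_base: "2 \<le> m \<Longrightarrow> pm n m (pm n m (pm n m (C (Sm m 0)) (Mb m 1)) (Mb m 2)) (C (Am m 0)) = (\<lambda>_ _. 0)"
proof -
  assume m: "2 \<le> m"
  have m': "0 + 2 \<le> m" using m by simp
  have eS: "C (Sm m 0) = NN n m (lift 0 2 (C S2))" unfolding Sm_def cmap_NN[OF hom] cmap_lift[OF hom] ..
  have eA: "C (Am m 0) = NN n m (lift 0 2 (C A2))" unfolding Am_def cmap_NN[OF hom] cmap_lift[OF hom] ..
  have eM1: "Mb m 1 = NN n m (lift 0 2 (lift 0 1 M))" unfolding Mb1 using lift_nest[of 0 1 2 0 m n M] m by simp
  have eF: "C (Fm m 0) = NN n m (lift 0 2 (C (lift 0 2 F)))"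
    unfolding Fm_def cmap_NN[OF hom] cmap_lift[OF hom] using lift_nest[of 0 2 2 0 m n "C F"] m by simp
  have eFi: "C (Fim m 0) = NN n m (lift 0 2 (C (lift 0 2 Fi)))"
    unfolding Fim_def cmap_NN[OF hom] cmap_lift[OF hom] using lift_nest[of 0 2 2 0 m n "C Fi"] m by simp
  have eM2: "Mb m 2 = NN n m (lift 0 2 (Mbar n 2 \<iota> F Fi M 2))"
  proof -
    have "Mbar n 2 \<iota> F Fi M 2 = mmul n 2 (mmul n 2 (C (lift 0 2 F)) (lift 0 1 M)) (C (lift 0 2 Fi))"
      by (simp add: numeral_2_eq_2)
    hence "NN n m (lift 0 2 (Mbar n 2 \<iota> F Fi M 2)) =
      pm n m (lift 0 2 (mmul n 2 (C (lift 0 2 F)) (lift 0 1 M))) (lift 0 2 (C (lift 0 2 Fi)))"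
      using NNlift_mmul[OF m'] by simp
    also have "\<dots> = pm n m (NN n m (lift 0 2 (mmul n 2 (C (lift 0 2 F)) (lift 0 1 M)))) (lift 0 2 (C (lift 0 2 Fi)))"
      by simp
    also have "\<dots> = pm n m (pm n m (NN n m (lift 0 2 (C (lift 0 2 F)))) (NN n m (lift 0 2 (lift 0 1 M)))) (NN n m (lift 0 2 (C (lift 0 2 Fi))))"
      unfolding NNlift_mmul[OF m'] by simp
    also have "\<dots> = Mb m 2" unfolding eF[symmetric] eFi[symmetric] eM1[symmetric]
      using MbS[of m 0] by (simp add: numeral_2_eq_2)
    finally show ?thesis by simp
  qed
  have "pm n m (pm n m (pm n m (C (Sm m 0)) (Mb m 1)) (Mb m 2)) (C (Am m 0)) =
    NN n m (lift 0 2 (pm n 2 (pm n 2 (pm n 2 (C S2) (lift 0 1 M)) (Mbar n 2 \<iota> F Fi M 2)) (C A2)))"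
    unfolding eS eA eM1 eM2 by (simp add: pm_lift_same[OF m'])
  also have "\<dots> = (\<lambda>_ _. 0)" unfolding hq by simp
  finally show ?thesis .
qed

end

declare cmap_app[simp del]

context setting begin

lemma claim1: "j + 2 \<le> m \<Longrightarrow> pm n m (pm n m (pm n m (C (Sm m j)) (Mb m (Suc j))) (Mb m (Suc (Suc j)))) (C (Am m j)) = (\<lambda>_ _. 0)"
proof (induction j)
  case 0 thus ?case using claim1_base[of m] by (simp add: numeral_2_eq_2)
next
  case (Suc j)
  have m3: "j + 3 \<le> m" using Suc.prems by simp
  define G where "G = pm n m (C (Fm m j)) (C (Fm m (Suc j)))"
  define Gi where "Gi = pm n m (C (Fim m (Suc j))) (C (Fim m j))"
  define M1 where "M1 = Mb m (Suc j)"
  define M2 where "M2 = Mb m (Suc (Suc j))"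
  define M3 where "M3 = Mb m (Suc (Suc (Suc j)))"
  have IH: "pm n m (pm n m (pm n m (C (Sm m j)) M1) M2) (C (Am m j)) = (\<lambda>_ _. 0)"
    unfolding M1_def M2_def using Suc.IH m3 by simp
  have GGi: "pm n m G Gi = NN n m idm" "pm n m Gi G = NN n m idm"
  proof -
    have "pm n m (pm n m (Fm m j) (Fm m (Suc j))) (pm n m (Fim m (Suc j)) (Fim m j)) = Ix m"
      using m3 by (simp add: pm_assoc rassoc[OF F_inv(1)[of "Suc j" m]] F_inv)
    from C_eq[OF this] show "pm n m G Gi = NN n m idm" unfolding G_def Gi_def C_pm C_Ix .
    have "pm n m (pm n m (Fim m (Suc j)) (Fim m j)) (pm n m (Fm m j) (Fm m (Suc j))) = Ix m"
      using m3 by (simp add: pm_assoc rassoc[OF F_inv(2)[of j m]] F_inv)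
    from C_eq[OF this] show "pm n m Gi G = NN n m idm" unfolding G_def Gi_def C_pm C_Ix .
  qed
  have E2: "pm n m (C (Sm m (Suc j))) G = pm n m G (C (Sm m j))"
    using C_eq[OF i4S[OF m3]] unfolding G_def C_pm by (simp add: pm_assoc)
  have E3a: "pm n m G (C (Am m j)) = pm n m (C (Am m (Suc j))) G"
    using C_eq[OF i4A[OF m3]] unfolding G_def C_pm by (simp add: pm_assoc)
  have E3: "pm n m Gi (C (Am m (Suc j))) = pm n m (C (Am m j)) Gi"
  proof -
    have "pm n m (C (Am m j)) Gi = pm n m (pm n m Gi G) (pm n m (C (Am m j)) Gi)" using GGi by simp
    also have "\<dots> = pm n m Gi (pm n m (pm n m G (C (Am m j))) Gi)" by (simp add: pm_assoc)
    also have "\<dots> = pm n m Gi (pm n m (pm n m (C (Am m (Suc j))) G) Gi)" unfolding E3a ..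
    also have "\<dots> = pm n m (pm n m Gi (C (Am m (Suc j)))) (pm n m G Gi)" by (simp add: pm_assoc)
    also have "\<dots> = pm n m Gi (C (Am m (Suc j)))" using GGi by simp
    finally show ?thesis by simp
  qed
  have c1: "pm n m (C (Fm m (Suc j))) M1 = pm n m M1 (C (Fm m (Suc j)))"
    unfolding M1_def Fm_def by (rule F1) (use m3 in auto)
  have c2: "pm n m (pm n m (C (Fm m (Suc j))) M2) (C (Fim m (Suc j))) = M3"
    unfolding M2_def M3_def using MbS[of m "Suc j"] by simp
  have c3: "pm n m M3 (C (Fim m j)) = pm n m (C (Fim m j)) M3"
    unfolding M3_def using F2Fi[of j "Suc (Suc (Suc j))" m] m3 by simp
  have c4: "pm n m (pm n m (C (Fm m j)) M1) (C (Fim m j)) = M2"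
    unfolding M1_def M2_def using MbS[of m j] by simp
  have E1: "pm n m M2 M3 = pm n m (pm n m G (pm n m M1 M2)) Gi"
  proof -
    have "pm n m (pm n m G (pm n m M1 M2)) Gi =
      pm n m (C (Fm m j)) (pm n m (pm n m (C (Fm m (Suc j))) M1) (pm n m M2 Gi))"
      unfolding G_def by (simp add: pm_assoc)
    also have "\<dots> = pm n m (C (Fm m j)) (pm n m M1 (pm n m (pm n m (pm n m (C (Fm m (Suc j))) M2) (C (Fim m (Suc j)))) (C (Fim m j))))"
      unfolding c1 Gi_def by (simp add: pm_assoc)
    also have "\<dots> = pm n m (C (Fm m j)) (pm n m M1 (pm n m M3 (C (Fim m j))))" unfolding c2 ..
    also have "\<dots> = pm n m (pm n m (pm n m (C (Fm m j)) M1) (C (Fim m j))) M3" unfolding c3 by (simp add: pm_assoc)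
    also have "\<dots> = pm n m M2 M3" unfolding c4 ..
    finally show ?thesis by simp
  qed
  have "pm n m (pm n m (pm n m (C (Sm m (Suc j))) M2) M3) (C (Am m (Suc j))) =
     pm n m (pm n m (C (Sm m (Suc j))) G) (pm n m (pm n m M1 M2) (pm n m Gi (C (Am m (Suc j)))))"
    by (simp add: pm_assoc E1)
  also have "\<dots> = pm n m G (pm n m (pm n m (pm n m (C (Sm m j)) M1) M2) (pm n m (C (Am m j)) Gi))"
    unfolding E2 E3 by (simp add: pm_assoc)
  also have "\<dots> = pm n m G (pm n m (pm n m (pm n m (pm n m (C (Sm m j)) M1) M2) (C (Am m j))) Gi)"
    by (simp add: pm_assoc)
  also have "\<dots> = (\<lambda>_ _. 0)" unfolding IH by simp
  finally show ?case unfolding M2_def M3_def by simp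
qed

end

lemma qnum_Suc1: "q \<noteq> 0 \<Longrightarrow> qnum q (Suc k) = q ^ k + inverse q * qnum q k"
proof -
  assume q: "q \<noteq> 0"
  have f: "q powi (int (Suc k) - 1 - 2 * int (Suc i)) = inverse q * q powi (int k - 1 - 2 * int i)" for i
  proof -
    have e: "int (Suc k) - 1 - 2 * int (Suc i) = (int k - 1 - 2 * int i) + (-1)" by simp
    show ?thesis unfolding e by (subst power_int_add) (use q in \<open>simp_all add: power_int_minus mult.commute\<close>)
  qed
  have "qnum q (Suc k) = q powi (int (Suc k) - 1 - 2 * int 0) + (\<Sum>i<k. q powi (int (Suc k) - 1 - 2 * int (Suc i)))"
    unfolding qnum_def by (rule sum.lessThan_Suc_shift)
  also have "\<dots> = q ^ k + inverse q * qnum q k"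
    unfolding f qnum_def by (simp add: sum_distrib_left)
  finally show ?thesis .
qed

lemma qnum_Suc2: "q \<noteq> 0 \<Longrightarrow> qnum q (Suc k) = q powi (- int k) + q * qnum q k"
proof -
  assume q: "q \<noteq> 0"
  have f: "q powi (int (Suc k) - 1 - 2 * int i) = q * q powi (int k - 1 - 2 * int i)" for i
  proof -
    have e: "int (Suc k) - 1 - 2 * int i = (int k - 1 - 2 * int i) + 1" by simp
    show ?thesis unfolding e by (rule power_int_add_1') (use q in simp)
  qed
  have "qnum q (Suc k) = (\<Sum>i<k. q powi (int (Suc k) - 1 - 2 * int i)) + q powi (int (Suc k) - 1 - 2 * int k)"
    unfolding qnum_def by (rule sum.lessThan_Suc)
  also have "\<dots> = q powi (- int k) + q * qnum q k"
    unfolding f qnum_def using power_int_add_1'[of q "- int k - 1"] q by (simp add: sum_distrib_left)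
  finally show ?thesis .
qed

lemma qnum_1: "qnum q 1 = 1" by (simp add: qnum_def)
lemma qnum_2: "q \<noteq> 0 \<Longrightarrow> qnum q 2 = q + inverse q"
  using qnum_Suc1[of q 1] by (simp add: qnum_def numeral_2_eq_2)

lemma qadm_le: "qadm q k \<Longrightarrow> j \<le> k \<Longrightarrow> qadm q j" by (auto simp: qadm_def)
lemma qadm_nz: "qadm q k \<Longrightarrow> 1 \<le> j \<Longrightarrow> j \<le> k \<Longrightarrow> qnum q j \<noteq> 0" by (auto simp: qadm_def)

context setting begin

definition "aA m i k = NN n m (lift i k (qA n q R k))"
definition "aS m i k = NN n m (lift i k (qS n q R k))"

lemma NN_aA[simp]: "NN n m (aA m i k) = aA m i k" by (simp add: aA_def)
lemma NN_aS[simp]: "NN n m (aS m i k) = aS m i k" by (simp add: aS_def)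

lemma aA1: "aA m i 1 = Ix m" by (simp add: aA_def Ix_def)
lemma aS1: "aS m i 1 = Ix m" by (simp add: aS_def Ix_def)

lemma NN_lift_mmul2: "i + k \<le> m \<Longrightarrow> NN n m (lift i k (mmul n k (mmul n k X Y) Z)) =
   pm n m (pm n m (NN n m (lift i k X)) (NN n m (lift i k Y))) (NN n m (lift i k Z))"
proof -
  assume h: "i + k \<le> m"
  have "NN n m (lift i k (mmul n k (mmul n k X Y) Z)) = pm n m (lift i k (mmul n k X Y)) (lift i k Z)"
    by (rule NNlift_mmul[OF h])
  also have "\<dots> = pm n m (NN n m (lift i k (mmul n k X Y))) (lift i k Z)" by simp
  also have "\<dots> = pm n m (pm n m (NN n m (lift i k X)) (NN n m (lift i k Y))) (NN n m (lift i k Z))"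
    unfolding NNlift_mmul[OF h] by simp
  finally show ?thesis .
qed

lemma aA_rec: "i + Suc (Suc k) \<le> m \<Longrightarrow> aA m i (Suc (Suc k)) =
  smul (inverse (qnum q (Suc (Suc k)))) (pm n m (pm n m (aA m i (Suc k))
     (psub (smul (q ^ Suc k) (Ix m)) (smul (qnum q (Suc k)) (Rm m (i + k))))) (aA m i (Suc k)))"
proof -
  assume h: "i + Suc (Suc k) \<le> m"
  define B where "B = lift 0 (Suc k) (qA n q R (Suc k))"
  define W where "W = (\<lambda>r c. q ^ Suc k * idm r c - qnum q (Suc k) * lift k 2 R r c)"
  have q1: "qA n q R (Suc (Suc k)) = smul (inverse (qnum q (Suc (Suc k)))) (mmul n (Suc (Suc k)) (mmul n (Suc (Suc k)) B W) B)"
    by (simp add: B_def W_def Let_def fun_eq_iff field_simps)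
  have eB: "NN n m (lift i (Suc (Suc k)) B) = aA m i (Suc k)"
    unfolding B_def aA_def using lift_nest[of 0 "Suc k" "Suc (Suc k)" i m n] h by simp
  have eW: "NN n m (lift i (Suc (Suc k)) W) = psub (smul (q ^ Suc k) (Ix m)) (smul (qnum q (Suc k)) (Rm m (i + k)))"
  proof -
    have "W = psub (smul (q ^ Suc k) idm) (smul (qnum q (Suc k)) (lift k 2 R))" by (simp add: W_def fun_eq_iff)
    hence "NN n m (lift i (Suc (Suc k)) W) = psub (smul (q ^ Suc k) (NN n m idm)) (smul (qnum q (Suc k)) (NN n m (lift i (Suc (Suc k)) (lift k 2 R))))"
      by (simp add: lift_psub lift_smul NN_psub NN_smul)
    also have "NN n m (lift i (Suc (Suc k)) (lift k 2 R)) = Rm m (i + k)"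
      unfolding Rm_def using lift_nest[of k 2 "Suc (Suc k)" i m n R] h by simp
    finally show ?thesis unfolding Ix_def .
  qed
  show ?thesis
    unfolding aA_def q1 lift_smul NN_smul NN_lift_mmul2[OF h] eB[unfolded aA_def] eW[symmetric] ..
qed

lemma aS_rec: "i + Suc (Suc k) \<le> m \<Longrightarrow> aS m i (Suc (Suc k)) =
  smul (inverse (qnum q (Suc (Suc k)))) (pm n m (pm n m (aS m i (Suc k))
     (padd (smul (q powi (- int (Suc k))) (Ix m)) (smul (qnum q (Suc k)) (Rm m (i + k))))) (aS m i (Suc k)))"
proof -
  assume h: "i + Suc (Suc k) \<le> m"
  define B where "B = lift 0 (Suc k) (qS n q R (Suc k))"
  define W where "W = (\<lambda>r c. q powi (- int (Suc k)) * idm r c + qnum q (Suc k) * lift k 2 R r c)"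
  have q1: "qS n q R (Suc (Suc k)) = smul (inverse (qnum q (Suc (Suc k)))) (mmul n (Suc (Suc k)) (mmul n (Suc (Suc k)) B W) B)"
    by (simp add: B_def W_def Let_def fun_eq_iff field_simps)
  have eB: "NN n m (lift i (Suc (Suc k)) B) = aS m i (Suc k)"
    unfolding B_def aS_def using lift_nest[of 0 "Suc k" "Suc (Suc k)" i m n] h by simp
  have eW: "NN n m (lift i (Suc (Suc k)) W) = padd (smul (q powi (- int (Suc k))) (Ix m)) (smul (qnum q (Suc k)) (Rm m (i + k)))"
  proof -
    have "W = padd (smul (q powi (- int (Suc k))) idm) (smul (qnum q (Suc k)) (lift k 2 R))" by (simp add: W_def fun_eq_iff)
    hence "NN n m (lift i (Suc (Suc k)) W) = padd (smul (q powi (- int (Suc k))) (NN n m idm)) (smul (qnum q (Suc k)) (NN n m (lift i (Suc (Suc k)) (lift k 2 R))))"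
      by (simp add: lift_padd lift_smul NN_padd NN_smul)
    also have "NN n m (lift i (Suc (Suc k)) (lift k 2 R)) = Rm m (i + k)"
      unfolding Rm_def using lift_nest[of k 2 "Suc (Suc k)" i m n R] h by simp
    finally show ?thesis unfolding Ix_def .
  qed
  show ?thesis
    unfolding aS_def q1 lift_smul NN_smul NN_lift_mmul2[OF h] eB[unfolded aS_def] eW[symmetric] ..
qed

end

declare padd_app[simp del] psub_app[simp del] smul_app[simp del]

context setting begin

lemma NN_Y: "NN n m (NN n m Y) = NN n m Y" by simp

lemma H1A_c:
  assumes "1 \<le> k" "qadm q k" "i + k \<le> m"
    and hy: "\<And>j. j + 1 < k \<Longrightarrow> pm n m (Rm m (i+j)) Y = smul (- inverse q) (NN n m Y)"
  shows "pm n m (aA m i k) Y = NN n m (Y::complex op)"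
  using assms
proof (induction k rule: nat_induct_at_least)
  case base thus ?case using aA1[of m i] by simp
next
  case (Suc k)
  then obtain k0 where k0: "k = Suc k0" by (cases k) auto
  have IH: "pm n m (aA m i k) Y = NN n m Y"
    using Suc.prems qadm_le[OF Suc.prems(1)] by (intro Suc.IH) auto
  have hs: "pm n m (Rm m (i + k0)) Y = smul (- inverse q) (NN n m Y)"
    using Suc.prems k0 by auto
  have nz: "qnum q (Suc (Suc k0)) \<noteq> 0" using qadm_nz[OF Suc.prems(1)] k0 by auto
  have e: "q ^ Suc k0 - qnum q (Suc k0) * - inverse q = qnum q (Suc (Suc k0))"
    using qnum_Suc1[OF q_nz, of "Suc k0"] by (simp add: algebra_simps)
  have "pm n m (aA m i (Suc k)) Y = smul (inverse (qnum q (Suc (Suc k0))))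
     (psub (smul (q ^ Suc k0) (NN n m Y)) (smul (qnum q (Suc k0)) (smul (- inverse q) (NN n m Y))))"
    unfolding k0 aA_rec[OF Suc.prems(2)[unfolded k0]]
    using IH[unfolded k0] hs
    by (simp add: dist pm_assoc)
  also have "\<dots> = NN n m Y"
  proof -
    have p: "inverse (qnum q (Suc (Suc k0))) * (q ^ Suc k0 * y - qnum q (Suc k0) * (- inverse q * y)) = y" for y
    proof -
      have "q ^ Suc k0 * y - qnum q (Suc k0) * (- inverse q * y) = (q ^ Suc k0 - qnum q (Suc k0) * - inverse q) * y"
        by (simp add: algebra_simps)
      thus ?thesis unfolding e using nz by simp
    qed
    show ?thesis by (rule ext, rule ext, simp only: smul_app psub_app p)
  qed
  finally show ?case .
qed

lemma H1S_c:
  assumes "1 \<le> k" "qadm q k" "i + k \<le> m"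
    and hy: "\<And>j. j + 1 < k \<Longrightarrow> pm n m Y (Rm m (i+j)) = smul q (NN n m Y)"
  shows "pm n m Y (aS m i k) = NN n m (Y::complex op)"
  using assms
proof (induction k rule: nat_induct_at_least)
  case base thus ?case using aS1[of m i] by simp
next
  case (Suc k)
  then obtain k0 where k0: "k = Suc k0" by (cases k) auto
  have IH: "pm n m Y (aS m i k) = NN n m Y"
    using Suc.prems qadm_le[OF Suc.prems(1)] by (intro Suc.IH) auto
  have hs: "pm n m Y (Rm m (i + k0)) = smul q (NN n m Y)"
    using Suc.prems k0 by auto
  have nz: "qnum q (Suc (Suc k0)) \<noteq> 0" using qadm_nz[OF Suc.prems(1)] k0 by auto
  have e: "q powi (- int (Suc k0)) + qnum q (Suc k0) * q = qnum q (Suc (Suc k0))"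
    using qnum_Suc2[OF q_nz, of "Suc k0"] by (simp add: algebra_simps)
  have "pm n m Y (aS m i (Suc k)) = smul (inverse (qnum q (Suc (Suc k0))))
     (padd (smul (q powi (- int (Suc k0))) (NN n m Y)) (smul (qnum q (Suc k0)) (smul q (NN n m Y))))"
    unfolding k0 aS_rec[OF Suc.prems(2)[unfolded k0]]
    using IH[unfolded k0] hs
    by (simp add: dist pm_assoc[symmetric])
  also have "\<dots> = NN n m Y"
  proof -
    have p: "inverse (qnum q (Suc (Suc k0))) * (q powi (- int (Suc k0)) * y + qnum q (Suc k0) * (q * y)) = y" for y
    proof -
      have "q powi (- int (Suc k0)) * y + qnum q (Suc k0) * (q * y) = (q powi (- int (Suc k0)) + qnum q (Suc k0) * q) * y"
        by (simp add: algebra_simps)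
      thus ?thesis unfolding e using nz by simp
    qed
    show ?thesis by (rule ext, rule ext, simp only: smul_app padd_app p)
  qed
  finally show ?case .
qed

end

context setting begin

lemma aA_R_comm: "i + k \<le> p \<Longrightarrow> p + 2 \<le> m \<Longrightarrow> pm n m (aA m i k) (Rm m p) = pm n m (Rm m p) (aA m i k)"
  unfolding aA_def Rm_def pm_NN_left pm_NN_right
  by (rule pm_lift_disj) (simp_all add: mult.commute)
lemma aS_R_comm: "i + k \<le> p \<Longrightarrow> p + 2 \<le> m \<Longrightarrow> pm n m (aS m i k) (Rm m p) = pm n m (Rm m p) (aS m i k)"
  unfolding aS_def Rm_def pm_NN_left pm_NN_right
  by (rule pm_lift_disj) (simp_all add: mult.commute)

lemma NN_W: "NN n m (psub (smul x (Ix m)) (smul y (Rm m p))) = psub (smul x (Ix m)) (smul y (Rm m p))"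
  by (simp add: NN_psub NN_smul)

lemma H2A_new:
  assumes ta: "pm n m t a = smul (- inverse q) a"
    and ba: "pm n m b a = a"
    and bs: "pm n m b s = pm n m s b"
    and br: "pm n m (pm n m s t) s = pm n m (pm n m t s) t"
    and hk: "pm n m s s = padd (smul (q - inverse q) s) (Ix m)"
    and aeq: "a = smul (inverse K) (pm n m (pm n m b (psub (smul x (Ix m)) (smul L t))) b)"
    and Kd: "K = x + inverse q * L"
    and na: "NN n m a = a" and nb: "NN n m b = b" and ns: "NN n m s = s" and nt: "NN n m t = t"
  shows "pm n m s (pm n m (pm n m a (psub (smul (q * x) (Ix m)) (smul K s))) a)
       = smul (- inverse q) (pm n m (pm n m a (psub (smul (q * x) (Ix m)) (smul K s))) a)"
proof -
  define W where "W = psub (smul (q * x) (Ix m)) (smul K s)"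
  define W' where "W' = psub (smul x (Ix m)) (smul L t)"
  define P where "P = padd s (smul (inverse q) (Ix m))"
  have r1: "pm n m t a = smul (- inverse q) a" by (rule ta)
  have r2: "pm n m s (pm n m s a) = padd (smul (q - inverse q) (pm n m s a)) a"
  proof -
    have "pm n m s (pm n m s a) = pm n m (pm n m s s) a" by (simp add: pm_assoc)
    thus ?thesis unfolding hk by (simp add: dist na)
  qed
  have r3: "pm n m s (pm n m t (pm n m s a)) = smul (- inverse q) (pm n m t (pm n m s a))"
  proof -
    have "pm n m s (pm n m t (pm n m s a)) = pm n m (pm n m (pm n m s t) s) a" by (simp add: pm_assoc)
    also have "\<dots> = pm n m t (pm n m s (pm n m t a))" unfolding br by (simp add: pm_assoc)
    also have "\<dots> = smul (- inverse q) (pm n m t (pm n m s a))" unfolding r1 by (simp add: dist)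
    finally show ?thesis .
  qed
  have bW: "pm n m b (pm n m W a) = pm n m W a"
  proof -
    have "pm n m b W = pm n m W b" unfolding W_def by (simp add: dist bs nb)
    hence "pm n m b (pm n m W a) = pm n m W (pm n m b a)" by (metis pm_assoc)
    thus ?thesis unfolding ba .
  qed
  have bP: "pm n m P b = pm n m b P" unfolding P_def by (simp add: dist bs nb)
  have Z: "pm n m P (pm n m W' (pm n m W a)) = (\<lambda>_ _. 0)"
    unfolding P_def W'_def W_def
    apply (simp add: dist pm_assoc r1 r2 r3 na NN_psub NN_smul NN_padd)
    apply (rule ext)+
    apply (simp add: padd_app psub_app smul_app Kd)
    using q_nz apply (simp add: field_simps)
    done
  have aeq': "a = smul (inverse K) (pm n m (pm n m b W') b)" using aeq unfolding W'_def .
  have ex: "pm n m P (pm n m a Y) = smul (inverse K) (pm n m P (pm n m b (pm n m W' (pm n m b Y))))" for Y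
    by (subst aeq') (simp add: dist pm_assoc)
  have main: "pm n m P (pm n m (pm n m a W) a) = (\<lambda>_ _. 0)"
  proof -
    have "pm n m P (pm n m (pm n m a W) a) = pm n m P (pm n m a (pm n m W a))" by (simp add: pm_assoc)
    also have "\<dots> = smul (inverse K) (pm n m P (pm n m b (pm n m W' (pm n m W a))))" unfolding ex bW ..
    also have "\<dots> = smul (inverse K) (pm n m (pm n m P b) (pm n m W' (pm n m W a)))" by (simp add: pm_assoc)
    also have "\<dots> = smul (inverse K) (pm n m b (pm n m P (pm n m W' (pm n m W a))))" unfolding bP by (simp add: pm_assoc)
    also have "\<dots> = (\<lambda>_ _. 0)" unfolding Z by (simp add: fun_eq_iff smul_app)
    finally show ?thesis .
  qed
  hence "padd (pm n m s (pm n m (pm n m a W) a)) (smul (inverse q) (pm n m (pm n m a W) a)) = (\<lambda>_ _. 0)"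
    unfolding P_def by (simp add: dist)
  hence "pm n m s (pm n m (pm n m a W) a) = smul (- inverse q) (pm n m (pm n m a W) a)"
    by (simp add: fun_eq_iff padd_app smul_app add_eq_0_iff)
  thus ?thesis unfolding W_def .
qed

lemma H2S_new:
  assumes at: "pm n m a t = smul q a"
    and ab: "pm n m a b = a"
    and bs: "pm n m b s = pm n m s b"
    and br: "pm n m (pm n m s t) s = pm n m (pm n m t s) t"
    and hk: "pm n m s s = padd (smul (q - inverse q) s) (Ix m)"
    and aeq: "a = smul (inverse K) (pm n m (pm n m b (padd (smul x (Ix m)) (smul L t))) b)"
    and Kd: "K = x + q * L"
    and na: "NN n m a = a" and nb: "NN n m b = b" and ns: "NN n m s = s" and nt: "NN n m t = t"
  shows "pm n m (pm n m (pm n m a (padd (smul (inverse q * x) (Ix m)) (smul K s))) a) s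
       = smul q (pm n m (pm n m a (padd (smul (inverse q * x) (Ix m)) (smul K s))) a)"
proof -
  define W where "W = padd (smul (inverse q * x) (Ix m)) (smul K s)"
  define W' where "W' = padd (smul x (Ix m)) (smul L t)"
  define P where "P = psub s (smul q (Ix m))"
  have r1: "pm n m a t = smul q a" by (rule at)
  have r2: "pm n m (pm n m a s) s = padd (smul (q - inverse q) (pm n m a s)) a"
  proof -
    have "pm n m (pm n m a s) s = pm n m a (pm n m s s)" by (simp add: pm_assoc)
    thus ?thesis unfolding hk by (simp add: dist na)
  qed
  have r3: "pm n m (pm n m (pm n m a s) t) s = smul q (pm n m (pm n m a s) t)"
  proof -
    have "pm n m (pm n m (pm n m a s) t) s = pm n m a (pm n m (pm n m s t) s)" by (simp add: pm_assoc)
    also have "\<dots> = pm n m (pm n m (pm n m a t) s) t" unfolding br by (simp add: pm_assoc)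
    also have "\<dots> = smul q (pm n m (pm n m a s) t)" unfolding r1 by (simp add: dist)
    finally show ?thesis .
  qed
  have bW: "pm n m (pm n m a W) b = pm n m a W"
  proof -
    have "pm n m b W = pm n m W b" unfolding W_def by (simp add: dist bs nb)
    hence "pm n m (pm n m a W) b = pm n m (pm n m a b) W" by (metis pm_assoc)
    thus ?thesis unfolding ab .
  qed
  have bP: "pm n m P b = pm n m b P" unfolding P_def by (simp add: dist bs nb)
  have Z: "pm n m (pm n m (pm n m a W) W') P = (\<lambda>_ _. 0)"
    unfolding P_def W'_def W_def
    apply (simp add: dist pm_assoc[symmetric] r1 r2 r3 na NN_psub NN_smul NN_padd)
    apply (rule ext)+
    apply (simp add: padd_app psub_app smul_app Kd)
    using q_nz apply (simp add: field_simps)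
    done
  have aeq': "a = smul (inverse K) (pm n m (pm n m b W') b)" using aeq unfolding W'_def .
  have ex: "pm n m (pm n m Y a) P = smul (inverse K) (pm n m (pm n m (pm n m (pm n m Y b) W') b) P)" for Y
    by (subst aeq') (simp add: dist pm_assoc)
  have main: "pm n m (pm n m (pm n m a W) a) P = (\<lambda>_ _. 0)"
  proof -
    have "pm n m (pm n m (pm n m a W) a) P = smul (inverse K) (pm n m (pm n m (pm n m a W) W') (pm n m b P))"
      unfolding ex bW by (simp add: pm_assoc)
    also have "\<dots> = smul (inverse K) (pm n m (pm n m (pm n m (pm n m a W) W') P) b)" unfolding bP[symmetric] by (simp add: pm_assoc)
    also have "\<dots> = (\<lambda>_ _. 0)" unfolding Z by (simp add: fun_eq_iff smul_app)
    finally show ?thesis .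
  qed
  hence "psub (pm n m (pm n m (pm n m a W) a) s) (smul q (pm n m (pm n m a W) a)) = (\<lambda>_ _. 0)"
    unfolding P_def by (simp add: dist)
  hence "pm n m (pm n m (pm n m a W) a) s = smul q (pm n m (pm n m a W) a)"
    by (simp add: fun_eq_iff psub_app smul_app)
  thus ?thesis unfolding W_def .
qed

end

context setting begin

lemma smul_smul_comm: "smul a (smul b X) = smul b (smul a (X::complex op))"
  by (simp add: fun_eq_iff smul_app mult.left_commute)

lemma H2A: "qadm q k \<Longrightarrow> i + k \<le> m \<Longrightarrow> j + 1 < k \<Longrightarrow>
  pm n m (Rm m (i+j)) (aA m i k) = smul (- inverse q) (aA m i k)"
proof (induction k arbitrary: j rule: less_induct)
  case (less k)
  have "2 \<le> k" using less.prems by simp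
  then obtain k0 where k: "k = Suc (Suc k0)" using le_Suc_ex[of 2 k] by auto
  define a where "a = aA m i (Suc k0)"
  define s where "s = Rm m (i + k0)"
  define W where "W = psub (smul (q ^ Suc k0) (Ix m)) (smul (qnum q (Suc k0)) s)"
  define c where "c = inverse (qnum q (Suc (Suc k0)))"
  have m: "i + Suc (Suc k0) \<le> m" using less.prems k by simp
  have rec: "aA m i k = smul c (pm n m (pm n m a W) a)"
    unfolding k a_def W_def s_def c_def by (rule aA_rec[OF m])
  have IH: "pm n m (Rm m (i+j')) a = smul (- inverse q) a" if "j' + 1 < Suc k0" for j'
    unfolding a_def using less.prems that k qadm_le[OF less.prems(1)] by (intro less.IH) auto
  have na: "NN n m a = a" unfolding a_def by simp
  show ?case
  proof (cases "j < k0")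
    case True
    have ih: "pm n m (Rm m (i+j)) a = smul (- inverse q) a" using IH True by simp
    show ?thesis unfolding rec
      by (simp add: dist pm_assoc rassoc[OF ih] smul_smul_comm)
  next
    case False
    hence j: "j = k0" using less.prems k by simp
    have key: "pm n m s (pm n m (pm n m a W) a) = smul (- inverse q) (pm n m (pm n m a W) a)"
    proof (cases k0)
      case 0
      have a1: "a = Ix m" unfolding a_def 0 using aA1[of m i] by simp
      have hk: "pm n m s s = padd (smul (q - inverse q) s) (Ix m)" unfolding s_def by (rule hecke) (use m in simp)
      have ns: "NN n m s = s" unfolding s_def by simp
      show ?thesis unfolding a1 W_def 0
        apply (simp add: dist hk ns NN_psub NN_smul qnum_1[unfolded One_nat_def])
        apply (rule ext)+ apply (simp add: padd_app psub_app smul_app)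
        using q_nz by (simp add: field_simps)
    next
      case (Suc k1)
      define b where "b = aA m i (Suc k1)"
      define t where "t = Rm m (i + k1)"
      have sS: "s = Rm m (i + k1 + 1)" unfolding s_def Suc by simp
      have ta: "pm n m t a = smul (- inverse q) a" unfolding t_def using IH[of k1] Suc by simp
      have ba: "pm n m b a = a"
      proof -
        have "pm n m b a = NN n m a" unfolding b_def
          by (rule H1A_c) (use less.prems k Suc qadm_le[OF less.prems(1)] IH na in auto)
        thus ?thesis using na by simp
      qed
      have bs: "pm n m b s = pm n m s b" unfolding b_def s_def Suc
        by (rule aA_R_comm) (use m Suc in auto)
      have br: "pm n m (pm n m s t) s = pm n m (pm n m t s) t"
        unfolding sS t_def using braidR[of "i + k1" m] m Suc by simp
      have hk: "pm n m s s = padd (smul (q - inverse q) s) (Ix m)" unfolding s_def by (rule hecke) (use m in simp)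
      have aeq: "a = smul (inverse (qnum q (Suc (Suc k1)))) (pm n m (pm n m b (psub (smul (q ^ Suc k1) (Ix m)) (smul (qnum q (Suc k1)) t))) b)"
        unfolding a_def b_def t_def Suc by (rule aA_rec) (use m Suc in simp)
      have Kd: "qnum q (Suc (Suc k1)) = q ^ Suc k1 + inverse q * qnum q (Suc k1)" by (rule qnum_Suc1[OF q_nz])
      have W': "W = psub (smul (q * q ^ Suc k1) (Ix m)) (smul (qnum q (Suc (Suc k1))) s)"
        unfolding W_def Suc by simp
      show ?thesis unfolding W'
        by (rule H2A_new[OF ta ba bs br hk aeq Kd]) (simp_all add: a_def b_def s_def t_def)
    qed
    show ?thesis unfolding rec j s_def[symmetric]
      by (simp add: pm_smul_right_c key smul_smul_comm)
  qed
qed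

end

context setting begin

lemma H2S: "qadm q k \<Longrightarrow> i + k \<le> m \<Longrightarrow> j + 1 < k \<Longrightarrow>
  pm n m (aS m i k) (Rm m (i+j)) = smul q (aS m i k)"
proof (induction k arbitrary: j rule: less_induct)
  case (less k)
  have "2 \<le> k" using less.prems by simp
  then obtain k0 where k: "k = Suc (Suc k0)" using le_Suc_ex[of 2 k] by auto
  define a where "a = aS m i (Suc k0)"
  define s where "s = Rm m (i + k0)"
  define W where "W = padd (smul (q powi (- int (Suc k0))) (Ix m)) (smul (qnum q (Suc k0)) s)"
  define c where "c = inverse (qnum q (Suc (Suc k0)))"
  have m: "i + Suc (Suc k0) \<le> m" using less.prems k by simp
  have rec: "aS m i k = smul c (pm n m (pm n m a W) a)"
    unfolding k a_def W_def s_def c_def by (rule aS_rec[OF m])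
  have IH: "pm n m a (Rm m (i+j')) = smul q a" if "j' + 1 < Suc k0" for j'
    unfolding a_def using less.prems that k qadm_le[OF less.prems(1)] by (intro less.IH) auto
  have na: "NN n m a = a" unfolding a_def by simp
  show ?case
  proof (cases "j < k0")
    case True
    have ih: "pm n m a (Rm m (i+j)) = smul q a" using IH True by simp
    show ?thesis unfolding rec
      by (simp add: dist pm_assoc ih smul_smul_comm)
  next
    case False
    hence j: "j = k0" using less.prems k by simp
    have key: "pm n m (pm n m (pm n m a W) a) s = smul q (pm n m (pm n m a W) a)"
    proof (cases k0)
      case 0
      have a1: "a = Ix m" unfolding a_def 0 using aS1[of m i] by simp
      have hk: "pm n m s s = padd (smul (q - inverse q) s) (Ix m)" unfolding s_def by (rule hecke) (use m in simp)
      have ns: "NN n m s = s" unfolding s_def by simp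
      show ?thesis unfolding a1 W_def 0
        apply (simp add: dist hk ns NN_padd NN_smul qnum_1[unfolded One_nat_def] power_int_minus)
        apply (rule ext)+ apply (simp add: padd_app psub_app smul_app)
        using q_nz by (simp add: field_simps)
    next
      case (Suc k1)
      define b where "b = aS m i (Suc k1)"
      define t where "t = Rm m (i + k1)"
      have sS: "s = Rm m (i + k1 + 1)" unfolding s_def Suc by simp
      have at: "pm n m a t = smul q a" unfolding t_def using IH[of k1] Suc by simp
      have ab: "pm n m a b = a"
      proof -
        have "pm n m a b = NN n m a" unfolding b_def
          by (rule H1S_c) (use less.prems k Suc qadm_le[OF less.prems(1)] IH na in auto)
        thus ?thesis using na by simp
      qed
      have bs: "pm n m b s = pm n m s b" unfolding b_def s_def Suc
        by (rule aS_R_comm) (use m Suc in auto)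
      have br: "pm n m (pm n m s t) s = pm n m (pm n m t s) t"
        unfolding sS t_def using braidR[of "i + k1" m] m Suc by simp
      have hk: "pm n m s s = padd (smul (q - inverse q) s) (Ix m)" unfolding s_def by (rule hecke) (use m in simp)
      have aeq: "a = smul (inverse (qnum q (Suc (Suc k1)))) (pm n m (pm n m b (padd (smul (q powi (- int (Suc k1))) (Ix m)) (smul (qnum q (Suc k1)) t))) b)"
        unfolding a_def b_def t_def Suc by (rule aS_rec) (use m Suc in simp)
      have Kd: "qnum q (Suc (Suc k1)) = q powi (- int (Suc k1)) + q * qnum q (Suc k1)" by (rule qnum_Suc2[OF q_nz])
      have pw: "q powi (- int (Suc (Suc k1))) = inverse q * q powi (- int (Suc k1))"
      proof -
        have e: "- int (Suc (Suc k1)) = - int (Suc k1) + (-1)" by simp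
        show ?thesis unfolding e by (subst power_int_add) (use q_nz in \<open>simp_all add: power_int_minus mult.commute\<close>)
      qed
      have W': "W = padd (smul (inverse q * q powi (- int (Suc k1))) (Ix m)) (smul (qnum q (Suc (Suc k1))) s)"
        unfolding W_def Suc pw ..
      show ?thesis unfolding W'
        by (rule H2S_new[OF at ab bs br hk aeq Kd]) (simp_all add: a_def b_def s_def t_def)
    qed
    show ?thesis unfolding rec j s_def[symmetric]
      by (simp add: pm_smul_left key smul_smul_comm)
  qed
qed

end

context setting begin

lemma R_S: "j + 2 \<le> m \<Longrightarrow> Rm m j = psub (smul c2 (Sm m j)) (smul (inverse q) (Ix m))"
proof -
  assume h: "j + 2 \<le> m"
  show ?thesis unfolding R_A[OF h] S_A[OF h]
    by (rule ext, rule ext) (simp add: psub_app smul_app algebra_simps)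
qed

lemma C_psub: "C (psub X Y) = psub (C X) (C Y)" by (rule cmap_psub[OF hom])
lemma C_padd: "C (padd X Y) = padd (C X) (C Y)" by (rule cmap_padd[OF hom])
lemma C_smul: "C (smul a X) = smul (\<iota> a) (C X)" by (rule cmap_smul[OF hom])

lemma pm_smul_right_a: "pm n m X (smul (\<iota> a) Y) = smul (\<iota> a) (pm n m X Y)"
  by (rule pm_smul_right) (simp add: central)

lemmas dista = pm_smul_left pm_smul_right_a pm_psub_left pm_psub_right pm_padd_left pm_padd_right

lemma iota_comb: "\<iota> a * (\<iota> b * y - \<iota> d * (\<iota> e * y)) = \<iota> (a * (b - d * e)) * y"
  by (simp add: ahom_mult[OF hom] ahom_diff[OF hom] algebra_simps)
lemma iota_comb3: "\<iota> a * (\<iota> b * y - \<iota> d * (\<iota> e * y - \<iota> f * y)) = \<iota> (a * (b - d * (e - f))) * y"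
proof -
  have h: "\<iota> (a * (b - d * (e - f))) = \<iota> a * (\<iota> b - \<iota> d * (\<iota> e - \<iota> f))"
    by (simp only: ahom_mult[OF hom] ahom_diff[OF hom])
  show ?thesis unfolding h by (simp add: algebra_simps)
qed
lemma iota_comb4: "\<iota> a * (\<iota> b * y + \<iota> d * (\<iota> e * y - \<iota> f * y)) = \<iota> (a * (b + d * (e - f))) * y"
proof -
  have h: "\<iota> (a * (b + d * (e - f))) = \<iota> a * (\<iota> b + \<iota> d * (\<iota> e - \<iota> f))"
    by (simp only: ahom_mult[OF hom] ahom_add[OF hom] ahom_diff[OF hom])
  show ?thesis unfolding h by (simp add: algebra_simps)
qed
lemma iota_comb2: "\<iota> a * (\<iota> b * y + \<iota> d * (\<iota> e * y)) = \<iota> (a * (b + d * e)) * y"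
  by (simp add: ahom_mult[OF hom] ahom_add[OF hom] algebra_simps)

lemma H1A_a:
  assumes "1 \<le> k" "qadm q k" "i + k \<le> m"
    and hy: "\<And>j. j + 1 < k \<Longrightarrow> pm n m (C (Am m (i+j))) Y = NN n m Y"
  shows "pm n m (C (aA m i k)) Y = NN n m (Y::'a op)"
  using assms
proof (induction k rule: nat_induct_at_least)
  case base thus ?case using aA1[of m i] C_Ix[of m] by simp
next
  case (Suc k)
  then obtain k0 where k0: "k = Suc k0" by (cases k) auto
  have IH: "pm n m (C (aA m i k)) Y = NN n m Y"
    using Suc.prems qadm_le[OF Suc.prems(1)] by (intro Suc.IH) auto
  have hA: "pm n m (C (Am m (i + k0))) Y = NN n m Y" using Suc.prems k0 by auto
  have mk: "i + k0 + 2 \<le> m" using Suc.prems k0 by simp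
  have hs: "pm n m (C (Rm m (i + k0))) Y = psub (smul (\<iota> q) (NN n m Y)) (smul (\<iota> c2) (NN n m Y))"
    unfolding R_A[OF mk] using hA by (simp add: C_psub C_smul C_Ix dista)
  have nz: "qnum q (Suc (Suc k0)) \<noteq> 0" using qadm_nz[OF Suc.prems(1)] k0 by auto
  have e0: "q ^ Suc k0 - qnum q (Suc k0) * (q - c2) = qnum q (Suc (Suc k0))"
    using qnum_Suc1[OF q_nz, of "Suc k0"] by (simp add: algebra_simps)
  have e: "inverse (qnum q (Suc (Suc k0))) * (q ^ Suc k0 - qnum q (Suc k0) * (q - c2)) = 1"
    unfolding e0 using nz by simp
  have "pm n m (C (aA m i (Suc k))) Y = smul (\<iota> (inverse (qnum q (Suc (Suc k0)))))
     (psub (smul (\<iota> (q ^ Suc k0)) (NN n m Y)) (smul (\<iota> (qnum q (Suc k0))) (psub (smul (\<iota> q) (NN n m Y)) (smul (\<iota> c2) (NN n m Y)))))"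
    unfolding k0 aA_rec[OF Suc.prems(2)[unfolded k0]]
    using IH[unfolded k0] hs
    by (simp add: C_pm C_psub C_smul C_Ix dista pm_assoc)
  also have "\<dots> = NN n m Y"
    by (rule ext, rule ext, simp only: smul_app psub_app iota_comb3 e ahom_1[OF hom] mult_1_left)
  finally show ?case .
qed

lemma H1S_a:
  assumes "1 \<le> k" "qadm q k" "i + k \<le> m"
    and hy: "\<And>j. j + 1 < k \<Longrightarrow> pm n m Y (C (Sm m (i+j))) = NN n m Y"
  shows "pm n m Y (C (aS m i k)) = NN n m (Y::'a op)"
  using assms
proof (induction k rule: nat_induct_at_least)
  case base thus ?case using aS1[of m i] C_Ix[of m] by simp
next
  case (Suc k)
  then obtain k0 where k0: "k = Suc k0" by (cases k) auto
  have IH: "pm n m Y (C (aS m i k)) = NN n m Y"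
    using Suc.prems qadm_le[OF Suc.prems(1)] by (intro Suc.IH) auto
  have hS: "pm n m Y (C (Sm m (i + k0))) = NN n m Y" using Suc.prems k0 by auto
  have mk: "i + k0 + 2 \<le> m" using Suc.prems k0 by simp
  have hs: "pm n m Y (C (Rm m (i + k0))) = psub (smul (\<iota> c2) (NN n m Y)) (smul (\<iota> (inverse q)) (NN n m Y))"
    unfolding R_S[OF mk] using hS by (simp add: C_psub C_smul C_Ix dista)
  have nz: "qnum q (Suc (Suc k0)) \<noteq> 0" using qadm_nz[OF Suc.prems(1)] k0 by auto
  have e0: "q powi (- int (Suc k0)) + qnum q (Suc k0) * (c2 - inverse q) = qnum q (Suc (Suc k0))"
    using qnum_Suc2[OF q_nz, of "Suc k0"] by (simp add: algebra_simps)
  have e: "inverse (qnum q (Suc (Suc k0))) * (q powi (- int (Suc k0)) + qnum q (Suc k0) * (c2 - inverse q)) = 1"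
    unfolding e0 using nz by simp
  have "pm n m Y (C (aS m i (Suc k))) = smul (\<iota> (inverse (qnum q (Suc (Suc k0)))))
     (padd (smul (\<iota> (q powi (- int (Suc k0)))) (NN n m Y)) (smul (\<iota> (qnum q (Suc k0))) (psub (smul (\<iota> c2) (NN n m Y)) (smul (\<iota> (inverse q)) (NN n m Y)))))"
    unfolding k0 aS_rec[OF Suc.prems(2)[unfolded k0]]
    using IH[unfolded k0] hs
    by (simp add: C_pm C_padd C_smul C_Ix dista pm_assoc[symmetric])
  also have "\<dots> = NN n m Y"
    by (rule ext, rule ext, simp only: smul_app padd_app psub_app iota_comb4 e ahom_1[OF hom] mult_1_left)
  finally show ?case .
qed

end

context setting begin

definition "Mr m l len = NN n m (Mrange n m \<iota> F Fi M l len)"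

lemma NN_Mr[simp]: "NN n m (Mr m l len) = Mr m l len" by (simp add: Mr_def)
lemma Mr0: "Mr m l 0 = NN n m idm" by (simp add: Mr_def)
lemma MrS: "Mr m l (Suc len) = pm n m (Mr m l len) (Mb m (l + len))"
  by (simp add: Mr_def Mb_def)

lemma Mr_split: "Mr m l (a + b) = pm n m (Mr m l a) (Mr m (l + a) b)"
proof (induction b)
  case 0 thus ?case by (simp add: Mr0)
next
  case (Suc b)
  have "Mr m l (a + Suc b) = pm n m (Mr m l (a + b)) (Mb m (l + (a + b)))" using MrS[of m l "a + b"] by simp
  also have "\<dots> = pm n m (Mr m l a) (pm n m (Mr m (l + a) b) (Mb m (l + a + b)))"
    unfolding Suc by (simp add: pm_assoc add.assoc)
  also have "\<dots> = pm n m (Mr m l a) (Mr m (l + a) (Suc b))" unfolding MrS ..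
  finally show ?case .
qed

lemma Mr2: "Mr m l 2 = pm n m (Mb m l) (Mb m (Suc l))"
  using MrS[of m l 1] MrS[of m l 0] Mr0 by (simp add: numeral_2_eq_2)

lemma Mr_comm:
  assumes "\<And>j. l \<le> j \<Longrightarrow> j < l + len \<Longrightarrow> pm n m Z (Mb m j) = pm n m (Mb m j) Z" and nz: "NN n m Z = Z"
  shows "pm n m Z (Mr m l len) = pm n m (Mr m l len) Z"
  using assms(1)
proof (induction len)
  case 0 thus ?case by (simp add: Mr0 nz)
next
  case (Suc len)
  have a: "pm n m Z (Mr m l len) = pm n m (Mr m l len) Z" using Suc by auto
  have b: "pm n m Z (Mb m (l + len)) = pm n m (Mb m (l + len)) Z" using Suc.prems by auto
  show ?case unfolding MrS by (rule comm_prod[OF a b])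
qed

lemma nC: "NN n m (C (Am m p)) = C (Am m p)" "NN n m (C (Sm m p)) = C (Sm m p)"
  unfolding Am_def Sm_def by simp_all

lemma Q2A: "p + 2 \<le> m \<Longrightarrow> pm n m (Mr m (Suc p) 2) (C (Am m p)) = pm n m (pm n m (C (Am m p)) (Mr m (Suc p) 2)) (C (Am m p))"
  and Q2S: "p + 2 \<le> m \<Longrightarrow> pm n m (C (Sm m p)) (Mr m (Suc p) 2) = pm n m (pm n m (C (Sm m p)) (Mr m (Suc p) 2)) (C (Sm m p))"
proof -
  assume h: "p + 2 \<le> m"
  have z: "pm n m (pm n m (C (Sm m p)) (Mr m (Suc p) 2)) (C (Am m p)) = (\<lambda>_ _. 0)"
    unfolding Mr2 using claim1[OF h] by (simp add: pm_assoc)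
  have Se: "C (Sm m p) = psub (NN n m idm) (C (Am m p))" unfolding S_A[OF h] C_psub C_Ix ..
  have Ae: "C (Am m p) = psub (NN n m idm) (C (Sm m p))"
    unfolding S_A[OF h] C_psub C_Ix by (simp add: fun_eq_iff psub_app Am_def NN_def)
  show "pm n m (Mr m (Suc p) 2) (C (Am m p)) = pm n m (pm n m (C (Am m p)) (Mr m (Suc p) 2)) (C (Am m p))"
  proof -
    have "psub (pm n m (Mr m (Suc p) 2) (C (Am m p))) (pm n m (pm n m (C (Am m p)) (Mr m (Suc p) 2)) (C (Am m p))) = (\<lambda>_ _. 0)"
      using z unfolding Se by (simp add: dista)
    thus ?thesis by (simp add: fun_eq_iff psub_app)
  qed
  show "pm n m (C (Sm m p)) (Mr m (Suc p) 2) = pm n m (pm n m (C (Sm m p)) (Mr m (Suc p) 2)) (C (Sm m p))"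
  proof -
    have "psub (pm n m (C (Sm m p)) (Mr m (Suc p) 2)) (pm n m (pm n m (C (Sm m p)) (Mr m (Suc p) 2)) (C (Sm m p))) = (\<lambda>_ _. 0)"
      using z unfolding Ae by (simp add: dista)
    thus ?thesis by (simp add: fun_eq_iff psub_app)
  qed
qed

end

context setting begin

lemma X_split:
  assumes "i \<le> p" "p + 2 \<le> i + k"
  shows "Mr m (Suc i) k = pm n m (pm n m (Mr m (Suc i) (p - i)) (Mr m (Suc p) 2)) (Mr m (p + 3) (i + k - p - 2))"
proof -
  have k: "k = (p - i) + 2 + (i + k - p - 2)" using assms by simp
  have "Mr m (Suc i) k = Mr m (Suc i) ((p - i) + 2 + (i + k - p - 2))" by (rule arg_cong[OF k])
  also have "\<dots> = pm n m (Mr m (Suc i) ((p - i) + 2)) (Mr m (Suc i + ((p - i) + 2)) (i + k - p - 2))"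
    by (rule Mr_split)
  also have "\<dots> = pm n m (pm n m (Mr m (Suc i) (p - i)) (Mr m (Suc i + (p - i)) 2)) (Mr m (Suc i + ((p - i) + 2)) (i + k - p - 2))"
    unfolding Mr_split ..
  also have "\<dots> = pm n m (pm n m (Mr m (Suc i) (p - i)) (Mr m (Suc p) 2)) (Mr m (p + 3) (i + k - p - 2))"
    using assms by (simp add: numeral_3_eq_3)
  finally show ?thesis .
qed

lemma P_comm:
  assumes "i \<le> p" "p + 2 \<le> m"
  shows "pm n m (C (NN n m (lift p 2 Z))) (Mr m (Suc i) (p - i)) = pm n m (Mr m (Suc i) (p - i)) (C (NN n m (lift p 2 Z)))"
  by (rule Mr_comm) (use assms F1 in auto)

lemma XA:
  assumes h: "i \<le> p" "p + 2 \<le> i + k" "i + k \<le> m"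
  shows "pm n m (Mr m (Suc i) k) (C (Am m p)) = pm n m (pm n m (C (Am m p)) (Mr m (Suc i) k)) (C (Am m p))"
proof -
  define A where "A = C (Am m p)"
  define P where "P = Mr m (Suc i) (p - i)"
  define Q where "Q = Mr m (Suc p) 2"
  define T where "T = Mr m (p + 3) (i + k - p - 2)"
  have X: "Mr m (Suc i) k = pm n m (pm n m P Q) T" unfolding P_def Q_def T_def by (rule X_split) (use h in auto)
  have PA: "pm n m A P = pm n m P A" unfolding A_def P_def Am_def by (rule P_comm) (use h in auto)
  have TA: "pm n m A T = pm n m T A" unfolding A_def T_def
    by (rule Mr_comm) (use h F2A nC in auto)
  have QA: "pm n m Q A = pm n m (pm n m A Q) A" unfolding A_def Q_def by (rule Q2A) (use h in auto)
  have "pm n m (pm n m (pm n m P Q) T) A = pm n m P (pm n m Q (pm n m T A))" by (simp add: pm_assoc)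
  also have "\<dots> = pm n m P (pm n m Q (pm n m A T))" unfolding TA[symmetric] ..
  also have "\<dots> = pm n m P (pm n m A (pm n m Q (pm n m A T)))"
  proof -
    have "pm n m Q (pm n m A T) = pm n m (pm n m Q A) T" by (simp add: pm_assoc)
    also have "\<dots> = pm n m (pm n m (pm n m A Q) A) T" unfolding QA ..
    also have "\<dots> = pm n m A (pm n m Q (pm n m A T))" by (simp add: pm_assoc)
    finally show ?thesis by (rule arg_cong)
  qed
  also have "\<dots> = pm n m A (pm n m P (pm n m Q (pm n m A T)))" by (simp only: pm_assoc[symmetric] PA)
  also have "\<dots> = pm n m A (pm n m P (pm n m Q (pm n m T A)))" unfolding TA ..
  also have "\<dots> = pm n m (pm n m A (pm n m (pm n m P Q) T)) A" by (simp add: pm_assoc)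
  finally show ?thesis unfolding X A_def .
qed

lemma SX:
  assumes h: "i \<le> p" "p + 2 \<le> i + k" "i + k \<le> m"
  shows "pm n m (C (Sm m p)) (Mr m (Suc i) k) = pm n m (pm n m (C (Sm m p)) (Mr m (Suc i) k)) (C (Sm m p))"
proof -
  define A where "A = C (Sm m p)"
  define P where "P = Mr m (Suc i) (p - i)"
  define Q where "Q = Mr m (Suc p) 2"
  define T where "T = Mr m (p + 3) (i + k - p - 2)"
  have X: "Mr m (Suc i) k = pm n m (pm n m P Q) T" unfolding P_def Q_def T_def by (rule X_split) (use h in auto)
  have PA: "pm n m A P = pm n m P A" unfolding A_def P_def Sm_def by (rule P_comm) (use h in auto)
  have TA: "pm n m A T = pm n m T A" unfolding A_def T_def
    by (rule Mr_comm) (use h F2S nC in auto)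
  have QA: "pm n m A Q = pm n m (pm n m A Q) A" unfolding A_def Q_def by (rule Q2S) (use h in auto)
  have "pm n m A (pm n m (pm n m P Q) T) = pm n m A (pm n m P (pm n m Q T))" by (simp add: pm_assoc)
  also have "\<dots> = pm n m P (pm n m A (pm n m Q T))" by (simp only: pm_assoc[symmetric] PA)
  also have "\<dots> = pm n m P (pm n m A (pm n m Q (pm n m A T)))" by (simp only: pm_assoc[symmetric] QA[symmetric])
  also have "\<dots> = pm n m P (pm n m A (pm n m Q (pm n m T A)))" unfolding TA ..
  also have "\<dots> = pm n m A (pm n m P (pm n m Q (pm n m T A)))" by (simp only: pm_assoc[symmetric] PA)
  also have "\<dots> = pm n m (pm n m A (pm n m (pm n m P Q) T)) A" by (simp add: pm_assoc)
  finally show ?thesis unfolding X A_def .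
qed

end

context setting begin

lemma Aa: "qadm q k \<Longrightarrow> i + k \<le> m \<Longrightarrow> j + 1 < k \<Longrightarrow> pm n m (Am m (i+j)) (aA m i k) = aA m i k"
proof -
  assume h: "qadm q k" "i + k \<le> m" "j + 1 < k"
  have m2: "i + j + 2 \<le> m" using h by simp
  have "pm n m (Am m (i+j)) (aA m i k) = smul (inverse c2) (psub (smul q (aA m i k)) (smul (- inverse q) (aA m i k)))"
    unfolding A_R[OF m2] using H2A[OF h] by (simp add: dist)
  also have "\<dots> = aA m i k" using c2_nz
    by (simp add: fun_eq_iff smul_app psub_app field_simps)
  finally show ?thesis .
qed

lemma aS_S: "qadm q k \<Longrightarrow> i + k \<le> m \<Longrightarrow> j + 1 < k \<Longrightarrow> pm n m (aS m i k) (Sm m (i+j)) = aS m i k"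
proof -
  assume h: "qadm q k" "i + k \<le> m" "j + 1 < k"
  have m2: "i + j + 2 \<le> m" using h by simp
  have "pm n m (aS m i k) (Sm m (i+j)) = smul (inverse c2) (padd (smul (inverse q) (aS m i k)) (smul q (aS m i k)))"
    unfolding S_R[OF m2] using H2S[OF h] by (simp add: dist)
  also have "\<dots> = aS m i k" using c2_nz
    by (simp add: fun_eq_iff smul_app padd_app field_simps)
  finally show ?thesis .
qed

lemma claim2A:
  assumes h: "1 \<le> k" "qadm q k" "i + k \<le> m"
  shows "pm n m (pm n m (C (aA m i k)) (Mr m (Suc i) k)) (C (aA m i k)) = pm n m (Mr m (Suc i) k) (C (aA m i k))"
proof -
  define X where "X = Mr m (Suc i) k"
  define a where "a = C (aA m i k)"
  define Y where "Y = pm n m X a"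
  have hy: "pm n m (C (Am m (i+j))) Y = NN n m Y" if j: "j + 1 < k" for j
  proof -
    define A where "A = C (Am m (i+j))"
    have Aa': "pm n m A a = a" unfolding A_def a_def using C_eq[OF Aa[OF h(2,3) j]] by (simp add: C_pm)
    have XA': "pm n m X A = pm n m (pm n m A X) A" unfolding X_def A_def by (rule XA) (use h j in auto)
    have "pm n m A Y = pm n m A (pm n m X (pm n m A a))" unfolding Y_def Aa' ..
    also have "\<dots> = pm n m (pm n m (pm n m A X) A) a" by (simp add: pm_assoc)
    also have "\<dots> = pm n m X (pm n m A a)" unfolding XA'[symmetric] by (simp add: pm_assoc)
    also have "\<dots> = NN n m Y" unfolding Aa' Y_def by simp
    finally show ?thesis unfolding A_def .
  qed
  have "pm n m a Y = NN n m Y" unfolding a_def by (rule H1A_a[OF h]) (use hy in auto)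
  thus ?thesis unfolding Y_def X_def a_def by (simp add: pm_assoc)
qed

lemma claim2S:
  assumes h: "1 \<le> k" "qadm q k" "i + k \<le> m"
  shows "pm n m (pm n m (C (aS m i k)) (Mr m (Suc i) k)) (C (aS m i k)) = pm n m (C (aS m i k)) (Mr m (Suc i) k)"
proof -
  define X where "X = Mr m (Suc i) k"
  define a where "a = C (aS m i k)"
  define Y where "Y = pm n m a X"
  have hy: "pm n m Y (C (Sm m (i+j))) = NN n m Y" if j: "j + 1 < k" for j
  proof -
    define A where "A = C (Sm m (i+j))"
    have aS': "pm n m a A = a" unfolding A_def a_def using C_eq[OF aS_S[OF h(2,3) j]] by (simp add: C_pm)
    have SX': "pm n m A X = pm n m (pm n m A X) A" unfolding X_def A_def by (rule SX) (use h j in auto)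
    have "pm n m Y A = pm n m (pm n m (pm n m a A) X) A" unfolding Y_def aS' ..
    also have "\<dots> = pm n m a (pm n m (pm n m A X) A)" by (simp add: pm_assoc)
    also have "\<dots> = pm n m (pm n m a A) X" unfolding SX'[symmetric] by (simp add: pm_assoc)
    also have "\<dots> = NN n m Y" unfolding aS' Y_def by simp
    finally show ?thesis unfolding A_def .
  qed
  have "pm n m Y a = NN n m Y" unfolding a_def by (rule H1S_a[OF h]) (use hy in auto)
  thus ?thesis unfolding Y_def X_def a_def by (simp add: pm_assoc)
qed

end

theorem mainTheorem6:
  fixes n :: nat and q :: complex and R F Fi S2 A2 :: "complex op"
    and \<iota> :: "complex \<Rightarrow> 'a::ring_1" and M :: "'a op"
  assumes alg_add: "\<forall>a b. \<iota> (a + b) = \<iota> a + \<iota> b"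
    and alg_mult: "\<forall>a b. \<iota> (a * b) = \<iota> a * \<iota> b"
    and alg_one: "\<iota> 1 = 1"
    and alg_central: "\<forall>a x. \<iota> a * x = x * \<iota> a"
    and q_nz: "q \<noteq> 0"
    and R_aut: "\<exists>Ri. meq n 2 (mmul n 2 R Ri) idm \<and> meq n 2 (mmul n 2 Ri R) idm"
    and F_inv1: "meq n 2 (mmul n 2 F Fi) idm"
    and F_inv2: "meq n 2 (mmul n 2 Fi F) idm"
    and i1: "meq n 3 (mmul n 3 (mmul n 3 (lift 0 2 R) (lift 1 2 R)) (lift 0 2 R))
                      (mmul n 3 (mmul n 3 (lift 1 2 R) (lift 0 2 R)) (lift 1 2 R))"
    and i2: "meq n 3 (mmul n 3 (mmul n 3 (lift 0 2 F) (lift 1 2 F)) (lift 0 2 F))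
                      (mmul n 3 (mmul n 3 (lift 1 2 F) (lift 0 2 F)) (lift 1 2 F))"
    and i3: "meq n 3 (mmul n 3 (mmul n 3 (lift 0 2 R) (lift 1 2 F)) (lift 0 2 F))
                      (mmul n 3 (mmul n 3 (lift 1 2 F) (lift 0 2 F)) (lift 1 2 R))"
    and i4: "meq n 3 (mmul n 3 (mmul n 3 (lift 0 2 F) (lift 1 2 F)) (lift 0 2 R))
                      (mmul n 3 (mmul n 3 (lift 1 2 R) (lift 0 2 F)) (lift 1 2 F))"
    and ii_adm: "qadm q 2"
    and ii_S: "meq n 2 (mmul n 2 S2 S2) S2"
    and ii_A: "meq n 2 (mmul n 2 A2 A2) A2"
    and ii_sum: "meq n 2 (\<lambda>r c. S2 r c + A2 r c) idm"
    and ii_R: "meq n 2 R (\<lambda>r c. q * S2 r c - inverse q * A2 r c)"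
    and iv: "\<exists>Psi Psii. meq n 2 (mmul n 2 Psi Psii) idm \<and> meq n 2 (mmul n 2 Psii Psi) idm
               \<and> meq n 2 (ptr2 n (mmul n 3 (lift 0 2 Psi) (lift 1 2 F))) flip"
    and half_quantum:
      "meq n 2 (mmul n 2 (mmul n 2 (mmul n 2 (cmap \<iota> S2) (Mbar n 2 \<iota> F Fi M 1))
                                  (Mbar n 2 \<iota> F Fi M 2)) (cmap \<iota> A2)) (\<lambda>_ _. 0)"
  shows "(\<forall>j\<ge>1. meq n (j+1)
            (mmul n (j+1) (mmul n (j+1) (mmul n (j+1) (cmap \<iota> (lift (j-1) 2 S2))
                 (Mbar n (j+1) \<iota> F Fi M j)) (Mbar n (j+1) \<iota> F Fi M (j+1)))
                 (cmap \<iota> (lift (j-1) 2 A2)))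
            (\<lambda>_ _. 0))
       \<and> (\<forall>k i. k \<ge> 1 \<longrightarrow> qadm q k \<longrightarrow>
            meq n (i+k)
              (mmul n (i+k) (mmul n (i+k) (cmap \<iota> (lift i k (qA n q R k)))
                  (Mrange n (i+k) \<iota> F Fi M (i+1) k)) (cmap \<iota> (lift i k (qA n q R k))))
              (mmul n (i+k) (Mrange n (i+k) \<iota> F Fi M (i+1) k) (cmap \<iota> (lift i k (qA n q R k))))
          \<and> meq n (i+k)
              (mmul n (i+k) (mmul n (i+k) (cmap \<iota> (lift i k (qS n q R k)))
                  (Mrange n (i+k) \<iota> F Fi M (i+1) k)) (cmap \<iota> (lift i k (qS n q R k))))
              (mmul n (i+k) (cmap \<iota> (lift i k (qS n q R k))) (Mrange n (i+k) \<iota> F Fi M (i+1) k)))"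
proof -
  have hom: "ahom \<iota>" unfolding ahom_def using alg_add alg_mult alg_one by blast
  have c2: "q + inverse q \<noteq> 0" using ii_adm qnum_2[OF q_nz] qadm_nz[of q 2 2] by simp
  have Finv1': "pm n 2 F Fi = NN n 2 idm" using F_inv1 by (simp add: meq_NN)
  have Finv2': "pm n 2 Fi F = NN n 2 idm" using F_inv2 by (simp add: meq_NN)
  have i1': "pm n 3 (pm n 3 (lift 0 2 R) (lift 1 2 R)) (lift 0 2 R) = pm n 3 (pm n 3 (lift 1 2 R) (lift 0 2 R)) (lift 1 2 R)"
    using i1 by (simp add: meq_NN)
  have i2': "pm n 3 (pm n 3 (lift 0 2 F) (lift 1 2 F)) (lift 0 2 F) = pm n 3 (pm n 3 (lift 1 2 F) (lift 0 2 F)) (lift 1 2 F)"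
    using i2 by (simp add: meq_NN)
  have i3': "pm n 3 (pm n 3 (lift 0 2 R) (lift 1 2 F)) (lift 0 2 F) = pm n 3 (pm n 3 (lift 1 2 F) (lift 0 2 F)) (lift 1 2 R)"
    using i3 by (simp add: meq_NN)
  have i4': "pm n 3 (pm n 3 (lift 0 2 F) (lift 1 2 F)) (lift 0 2 R) = pm n 3 (pm n 3 (lift 1 2 R) (lift 0 2 F)) (lift 1 2 F)"
    using i4 by (simp add: meq_NN)
  have Aid: "pm n 2 A2 A2 = NN n 2 A2" using ii_A by (simp add: meq_NN)
  have Sd: "NN n 2 S2 = NN n 2 (psub idm A2)"
    by (rule NN_cong) (use ii_sum in \<open>auto simp: meq_def psub_app algebra_simps\<close>)
  have Rd: "NN n 2 R = NN n 2 (psub (smul q idm) (smul (q + inverse q) A2))"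
  proof (rule NN_cong)
    fix r c assume rc: "r \<in> tidx n 2" "c \<in> tidx n 2"
    have "R r c = q * S2 r c - inverse q * A2 r c" using ii_R rc by (simp add: meq_def)
    moreover have "S2 r c = idm r c - A2 r c" using ii_sum rc by (simp add: meq_def algebra_simps)
    ultimately show "R r c = psub (smul q idm) (smul (q + inverse q) A2) r c"
      by (simp add: psub_app smul_app algebra_simps)
  qed
  have hq': "pm n 2 (pm n 2 (pm n 2 (cmap \<iota> S2) (lift 0 1 M)) (Mbar n 2 \<iota> F Fi M 2)) (cmap \<iota> A2) = (\<lambda>_ _. 0)"
    using half_quantum by (simp add: meq_NN)
  interpret S: setting n q R F Fi S2 A2 \<iota> M
    by (unfold_locales) (use hom alg_central q_nz c2 Finv1' Finv2' i1' i2' i3' i4' Aid Sd Rd hq' in auto)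
  show ?thesis
  proof (intro conjI allI impI)
    fix j :: nat assume j: "1 \<le> j"
    then obtain j' where j': "j = Suc j'" by (cases j) auto
    have "pm n (j+1) (pm n (j+1) (pm n (j+1) (S.C (S.Sm (j+1) j')) (S.Mb (j+1) (Suc j'))) (S.Mb (j+1) (Suc (Suc j')))) (S.C (S.Am (j+1) j')) = (\<lambda>_ _. 0)"
      by (rule S.claim1) (simp add: j')
    thus "meq n (j+1)
            (mmul n (j+1) (mmul n (j+1) (mmul n (j+1) (cmap \<iota> (lift (j-1) 2 S2))
                 (Mbar n (j+1) \<iota> F Fi M j)) (Mbar n (j+1) \<iota> F Fi M (j+1)))
                 (cmap \<iota> (lift (j-1) 2 A2)))
            (\<lambda>_ _. 0)"
      unfolding meq_NN j' S.Sm_def S.Am_def S.Mb_def cmap_NN[OF hom] by simp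
  next
    fix k i :: nat assume k: "1 \<le> k" "qadm q k"
    have h: "1 \<le> k" "qadm q k" "i + k \<le> i + k" using k by auto
    show "meq n (i+k)
              (mmul n (i+k) (mmul n (i+k) (cmap \<iota> (lift i k (qA n q R k)))
                  (Mrange n (i+k) \<iota> F Fi M (i+1) k)) (cmap \<iota> (lift i k (qA n q R k))))
              (mmul n (i+k) (Mrange n (i+k) \<iota> F Fi M (i+1) k) (cmap \<iota> (lift i k (qA n q R k))))"
      using S.claim2A[OF h] unfolding meq_NN S.aA_def S.Mr_def cmap_NN[OF hom] by simp
    show "meq n (i+k)
              (mmul n (i+k) (mmul n (i+k) (cmap \<iota> (lift i k (qS n q R k)))
                  (Mrange n (i+k) \<iota> F Fi M (i+1) k)) (cmap \<iota> (lift i k (qS n q R k))))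
              (mmul n (i+k) (cmap \<iota> (lift i k (qS n q R k))) (Mrange n (i+k) \<iota> F Fi M (i+1) k))"
      using S.claim2S[OF h] unfolding meq_NN S.aS_def S.Mr_def cmap_NN[OF hom] by simp
  qed
qed

end
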